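(* Let $\mathbf{P}$ be a finite poset with a metric $d_{\mathbf{P}}$, and let $M,N$ be $\mathbf{P}$-modules. If $d_{\mathrm{GT}}(M,N)=0$, then $M\cong N$. Consequently $d_{\mathrm{GT}}$ is an extended metric on isomorphism classes of $\mathbf{P}$-modules.
   Context: Fix a field $k$; $\mathrm{vect}$ is the category of finite-dimensional $k$-vector spaces. A finite poset is a category with a unique morphism $x\to y$ iff $x\le y$; a $\mathbf{P}$-module is a functor $\mathbf{P}\to\mathrm{vect}$. For a monotone map $g$, $g^*$ denotes precomposition with $g$. A Galois insertion $f:\mathbf{Q}\rightleftarrows\mathbf{P}:g$ consists of monotone maps $f:\mathbf{Q}\to\mathbf{P}$, $g:\mathbf{P}\to\mathbf{Q}$ with $f(u)\le x\iff u\le g(x)$ for all $u,x$, and $f\circ g=\mathrm{id}_{\mathbf{P}}$. A Galois coupling of $(M,N)$ is a tuple $(\mathbf{Q},f\dashv g,h\dashv i,\Gamma)$ with $\mathbf{Q}$ a finite poset, $f:\mathbf{Q}\rightleftarrows\mathbf{P}:g$ and $h:\mathbf{Q}\rightleftarrows\mathbf{P}:i$ Galois insertions, and $\Gamma\in\mathrm{vect}^{\mathbf{Q}}$ with $g^*\Gamma\cong M$ and $i^*\Gamma\cong N$. Its cost is $\sup_{q\in\mathbf{Q}}d_{\mathbf{P}}(f(q),h(q))$. $d_{\mathrm{GT}}(M,N)$ is the infimum of costs of all Galois couplings of $(M,N)$, and $\infty$ if there is none. *)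

theory Defs
  imports "Jordan_Normal_Form.Matrix" "HOL-Library.Extended_Real"
begin

text \<open>A finite-dimensional k-vector space is modelled as k^n (n = its dimension), a linear
map k^n -> k^m as an m x n matrix.  A module over a poset (carrier A, order lee) is a pair
(dimension function, structure maps) where the structure map for x \<le> y is a
(dim y) x (dim x) matrix, satisfying functoriality.\<close>

type_synonym ('p, 'k) pmod = "('p \<Rightarrow> nat) \<times> ('p \<Rightarrow> 'p \<Rightarrow> 'k mat)"

definition finite_poset :: "'q set \<Rightarrow> ('q \<Rightarrow> 'q \<Rightarrow> bool) \<Rightarrow> bool" where
  "finite_poset A lee \<longleftrightarrow> finite A \<and>
     (\<forall>x\<in>A. lee x x) \<and>
     (\<forall>x\<in>A. \<forall>y\<in>A. lee x y \<and> lee y x \<longrightarrow> x = y) \<and>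
     (\<forall>x\<in>A. \<forall>y\<in>A. \<forall>z\<in>A. lee x y \<and> lee y z \<longrightarrow> lee x z)"

definition is_pmod :: "'q set \<Rightarrow> ('q \<Rightarrow> 'q \<Rightarrow> bool) \<Rightarrow> ('q, 'k::field) pmod \<Rightarrow> bool" where
  "is_pmod A lee M \<longleftrightarrow>
     (\<forall>x\<in>A. snd M x x = 1\<^sub>m (fst M x)) \<and>
     (\<forall>x\<in>A. \<forall>y\<in>A. lee x y \<longrightarrow> snd M x y \<in> carrier_mat (fst M y) (fst M x)) \<and>
     (\<forall>x\<in>A. \<forall>y\<in>A. \<forall>z\<in>A. lee x y \<and> lee y z \<longrightarrow> snd M x z = snd M y z * snd M x y)"

definition pmod_iso :: "'q set \<Rightarrow> ('q \<Rightarrow> 'q \<Rightarrow> bool) \<Rightarrow> ('q, 'k::field) pmod \<Rightarrow> ('q, 'k) pmod \<Rightarrow> bool" where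
  "pmod_iso A lee M N \<longleftrightarrow> (\<exists>\<phi>.
     (\<forall>x\<in>A. fst N x = fst M x \<and> \<phi> x \<in> carrier_mat (fst M x) (fst M x) \<and> invertible_mat (\<phi> x)) \<and>
     (\<forall>x\<in>A. \<forall>y\<in>A. lee x y \<longrightarrow> \<phi> y * snd M x y = snd N x y * \<phi> x))"

definition pullback :: "('p \<Rightarrow> 'q) \<Rightarrow> ('q, 'k) pmod \<Rightarrow> ('p, 'k) pmod" where
  "pullback g G = (\<lambda>x. fst G (g x), \<lambda>x y. snd G (g x) (g y))"

definition galois_insertion :: "nat set \<Rightarrow> (nat \<Rightarrow> nat \<Rightarrow> bool) \<Rightarrow> (nat \<Rightarrow> 'p::order) \<Rightarrow> ('p \<Rightarrow> nat) \<Rightarrow> bool" where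
  "galois_insertion Q leQ f g \<longleftrightarrow>
     (\<forall>u\<in>Q. \<forall>v\<in>Q. leQ u v \<longrightarrow> f u \<le> f v) \<and>
     (\<forall>x. g x \<in> Q) \<and>
     (\<forall>x y. x \<le> y \<longrightarrow> leQ (g x) (g y)) \<and>
     (\<forall>u\<in>Q. \<forall>x. f u \<le> x \<longleftrightarrow> leQ u (g x)) \<and>
     (\<forall>x. f (g x) = x)"

definition is_metric :: "('p \<Rightarrow> 'p \<Rightarrow> real) \<Rightarrow> bool" where
  "is_metric d \<longleftrightarrow> (\<forall>x y. 0 \<le> d x y) \<and> (\<forall>x y. d x y = 0 \<longleftrightarrow> x = y) \<and>
     (\<forall>x y. d x y = d y x) \<and> (\<forall>x y z. d x z \<le> d x y + d y z)"

text \<open>Galois couplings; the finite poset Q is modelled (w.l.o.g., up to isomorphism)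
as a finite subset of nat with a partial order.\<close>
definition galois_coupling ::
  "('p::{finite,order}, 'k::field) pmod \<Rightarrow> ('p, 'k) pmod \<Rightarrow> nat set \<Rightarrow> (nat \<Rightarrow> nat \<Rightarrow> bool) \<Rightarrow>
   (nat \<Rightarrow> 'p) \<Rightarrow> ('p \<Rightarrow> nat) \<Rightarrow> (nat \<Rightarrow> 'p) \<Rightarrow> ('p \<Rightarrow> nat) \<Rightarrow> (nat, 'k) pmod \<Rightarrow> bool" where
  "galois_coupling M N Q leQ f g h i \<Gamma> \<longleftrightarrow>
     finite_poset Q leQ \<and> galois_insertion Q leQ f g \<and> galois_insertion Q leQ h i \<and>
     is_pmod Q leQ \<Gamma> \<and>
     pmod_iso UNIV (\<le>) (pullback g \<Gamma>) M \<and> pmod_iso UNIV (\<le>) (pullback i \<Gamma>) N"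

definition coupling_cost :: "('p \<Rightarrow> 'p \<Rightarrow> real) \<Rightarrow> nat set \<Rightarrow> (nat \<Rightarrow> 'p) \<Rightarrow> (nat \<Rightarrow> 'p) \<Rightarrow> ereal" where
  "coupling_cost d Q f h = (SUP q\<in>Q. ereal (d (f q) (h q)))"

definition d_GT :: "('p::{finite,order} \<Rightarrow> 'p \<Rightarrow> real) \<Rightarrow> ('p, 'k::field) pmod \<Rightarrow> ('p, 'k) pmod \<Rightarrow> ereal" where
  "d_GT d M N = Inf {c. \<exists>Q leQ f g h i \<Gamma>. galois_coupling M N Q leQ f g h i \<Gamma> \<and> c = coupling_cost d Q f h}"

end

theory Submission
  imports Defs "HOL-Library.Nat_Bijection"
begin

definition minv :: "'k::field mat \<Rightarrow> nat \<Rightarrow> 'k mat" where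
  "minv A n = (SOME B. B \<in> carrier_mat n n \<and> A * B = 1\<^sub>m n \<and> B * A = 1\<^sub>m n)"

lemma minv_props:
  fixes A :: "'k::field mat"
  assumes A: "A \<in> carrier_mat n n" and inv: "invertible_mat A"
  shows "minv A n \<in> carrier_mat n n" "A * minv A n = 1\<^sub>m n" "minv A n * A = 1\<^sub>m n"
    "invertible_mat (minv A n)"
proof -
  from inv obtain B where B: "inverts_mat A B" "inverts_mat B A"
    unfolding invertible_mat_def by auto
  have "A * B = 1\<^sub>m n" using B(1) A unfolding inverts_mat_def by auto
  moreover have "dim_row B = n" "dim_col B = n"
    using B A unfolding inverts_mat_def
    by (metis carrier_matD index_mult_mat(2,3) index_one_mat(2,3))+
  moreover have "B * A = 1\<^sub>m n" using B(2) \<open>dim_row B = n\<close> unfolding inverts_mat_def by auto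
  ultimately have ex: "\<exists>B. B \<in> carrier_mat n n \<and> A * B = 1\<^sub>m n \<and> B * A = 1\<^sub>m n" by auto
  have *: "minv A n \<in> carrier_mat n n \<and> A * minv A n = 1\<^sub>m n \<and> minv A n * A = 1\<^sub>m n"
    unfolding minv_def by (rule someI_ex[OF ex])
  then show "minv A n \<in> carrier_mat n n" "A * minv A n = 1\<^sub>m n" "minv A n * A = 1\<^sub>m n" by auto
  show "invertible_mat (minv A n)"
    unfolding invertible_mat_def inverts_mat_def using * A by auto
qed

lemma invertible_one: "invertible_mat (1\<^sub>m n :: 'k::field mat)"
  unfolding invertible_mat_def inverts_mat_def by (intro conjI exI[of _ "1\<^sub>m n"]) auto

lemma invertible_mult:
  fixes A B :: "'k::field mat"
  assumes A: "A \<in> carrier_mat n n" "invertible_mat A" and B: "B \<in> carrier_mat n n" "invertible_mat B"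
  shows "invertible_mat (A * B)"
proof -
  note a = minv_props[OF A] and b = minv_props[OF B]
  have AB: "A * B \<in> carrier_mat n n" using A B by auto
  have BA: "minv B n * minv A n \<in> carrier_mat n n" using a b by auto
  have "(A * B) * (minv B n * minv A n) = A * (B * (minv B n * minv A n))"
    by (rule assoc_mult_mat[OF A(1) B(1) BA])
  also have "B * (minv B n * minv A n) = (B * minv B n) * minv A n"
    by (rule assoc_mult_mat[OF B(1) b(1) a(1), symmetric])
  also have "\<dots> = minv A n" using b a by simp
  finally have 1: "(A * B) * (minv B n * minv A n) = 1\<^sub>m n" using a by simp
  have "(minv B n * minv A n) * (A * B) = minv B n * (minv A n * (A * B))"
    by (rule assoc_mult_mat[OF b(1) a(1) AB])
  also have "minv A n * (A * B) = (minv A n * A) * B"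
    by (rule assoc_mult_mat[OF a(1) A(1) B(1), symmetric])
  also have "\<dots> = B" using B a by simp
  finally have 2: "(minv B n * minv A n) * (A * B) = 1\<^sub>m n" using b by simp
  show ?thesis unfolding invertible_mat_def inverts_mat_def
    using 1 2 A B a b by (intro conjI exI[of _ "minv B n * minv A n"]) auto
qed

lemma swap_conj1:
  fixes a b X Y :: "'k::field mat"
  assumes a: "a \<in> carrier_mat m m" "invertible_mat a" and b: "b \<in> carrier_mat n n" "invertible_mat b"
    and X: "X \<in> carrier_mat n m" and Y: "Y \<in> carrier_mat n m" and eq: "b * X = Y * a"
  shows "X * minv a m = minv b n * Y"
proof -
  note ai = minv_props[OF a] and bi = minv_props[OF b]
  have "X * minv a m = (minv b n * b) * X * minv a m" using X bi by simp
  also have "\<dots> = minv b n * (b * X) * minv a m"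
    using assoc_mult_mat[OF bi(1) b(1) X] by simp
  also have "\<dots> = minv b n * (Y * a) * minv a m" using eq by simp
  also have "\<dots> = minv b n * ((Y * a) * minv a m)"
    using Y a ai bi by (intro assoc_mult_mat) auto
  also have "(Y * a) * minv a m = Y * (a * minv a m)"
    using Y a ai by (intro assoc_mult_mat) auto
  also have "\<dots> = Y" using Y ai by simp
  finally show ?thesis .
qed

lemma swap_conj2:
  fixes a b X Y :: "'k::field mat"
  assumes a: "a \<in> carrier_mat m m" "invertible_mat a"
    and X: "X \<in> carrier_mat n m" and Y: "Y \<in> carrier_mat n m" and eq: "b * X = Y * a"
  shows "b * X * minv a m = Y"
proof -
  note ai = minv_props[OF a]
  have "b * X * minv a m = (Y * a) * minv a m" using eq by simp
  also have "\<dots> = Y * (a * minv a m)"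
    using Y a ai by (intro assoc_mult_mat) auto
  also have "\<dots> = Y" using Y ai by simp
  finally show ?thesis .
qed

lemma iso_refl:
  assumes "is_pmod A lee M"
  shows "pmod_iso A lee M (M :: ('q, 'k::field) pmod)"
  unfolding pmod_iso_def
proof (intro exI[of _ "\<lambda>x. 1\<^sub>m (fst M x)"] conjI ballI impI)
  fix x y assume "x \<in> A" "y \<in> A" "lee x y"
  then have "snd M x y \<in> carrier_mat (fst M y) (fst M x)" using assms unfolding is_pmod_def by auto
  then show "1\<^sub>m (fst M y) * snd M x y = snd M x y * 1\<^sub>m (fst M x)" by simp
qed (auto simp: invertible_one)

lemma iso_sym:
  assumes M: "is_pmod A lee M" and N: "is_pmod A lee N" and iso: "pmod_iso A lee M (N :: ('q, 'k::field) pmod)"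
  shows "pmod_iso A lee N M"
proof -
  obtain \<phi> where p1: "\<forall>x\<in>A. fst N x = fst M x \<and> \<phi> x \<in> carrier_mat (fst M x) (fst M x) \<and> invertible_mat (\<phi> x)"
    and p2: "\<forall>x\<in>A. \<forall>y\<in>A. lee x y \<longrightarrow> \<phi> y * snd M x y = snd N x y * \<phi> x"
    using iso unfolding pmod_iso_def by blast
  show ?thesis unfolding pmod_iso_def
  proof (intro exI[of _ "\<lambda>x. minv (\<phi> x) (fst M x)"] conjI ballI impI)
    fix x assume x: "x \<in> A"
    then show "fst M x = fst N x" using p1 by auto
    show "minv (\<phi> x) (fst M x) \<in> carrier_mat (fst N x) (fst N x)"
      "invertible_mat (minv (\<phi> x) (fst M x))" using minv_props[of "\<phi> x" "fst M x"] p1 x by auto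
  next
    fix x y assume xy: "x \<in> A" "y \<in> A" "lee x y"
    have X: "snd M x y \<in> carrier_mat (fst M y) (fst M x)" using M xy unfolding is_pmod_def by auto
    have Y: "snd N x y \<in> carrier_mat (fst M y) (fst M x)" using N xy p1 unfolding is_pmod_def by auto
    show "minv (\<phi> y) (fst M y) * snd N x y = snd M x y * minv (\<phi> x) (fst M x)"
      using swap_conj1[OF _ _ _ _ X Y p2[rule_format, OF xy]] p1 xy by auto
  qed
qed

lemma iso_trans:
  assumes M: "is_pmod A lee M" and N: "is_pmod A lee N" and L: "is_pmod A lee L"
    and i1: "pmod_iso A lee M (N :: ('q, 'k::field) pmod)" and i2: "pmod_iso A lee N L"
  shows "pmod_iso A lee M L"
proof -
  obtain \<phi> where p1: "\<forall>x\<in>A. fst N x = fst M x \<and> \<phi> x \<in> carrier_mat (fst M x) (fst M x) \<and> invertible_mat (\<phi> x)"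
    and p2: "\<forall>x\<in>A. \<forall>y\<in>A. lee x y \<longrightarrow> \<phi> y * snd M x y = snd N x y * \<phi> x"
    using i1 unfolding pmod_iso_def by blast
  obtain \<psi> where q1: "\<forall>x\<in>A. fst L x = fst N x \<and> \<psi> x \<in> carrier_mat (fst N x) (fst N x) \<and> invertible_mat (\<psi> x)"
    and q2: "\<forall>x\<in>A. \<forall>y\<in>A. lee x y \<longrightarrow> \<psi> y * snd N x y = snd L x y * \<psi> x"
    using i2 unfolding pmod_iso_def by blast
  show ?thesis unfolding pmod_iso_def
  proof (intro exI[of _ "\<lambda>x. \<psi> x * \<phi> x"] conjI ballI impI)
    fix x assume x: "x \<in> A"
    then show "fst L x = fst M x" using p1 q1 by auto
    show "\<psi> x * \<phi> x \<in> carrier_mat (fst M x) (fst M x)" using p1 q1 x by auto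
    show "invertible_mat (\<psi> x * \<phi> x)" using p1 q1 x by (intro invertible_mult[of _ "fst M x"]) auto
  next
    fix x y assume xy: "x \<in> A" "y \<in> A" "lee x y"
    have Mc: "snd M x y \<in> carrier_mat (fst M y) (fst M x)" using M xy unfolding is_pmod_def by auto
    have Nc: "snd N x y \<in> carrier_mat (fst M y) (fst M x)" using N xy p1 unfolding is_pmod_def by auto
    have Lc: "snd L x y \<in> carrier_mat (fst M y) (fst M x)" using L xy p1 q1 unfolding is_pmod_def by auto
    have px: "\<phi> x \<in> carrier_mat (fst M x) (fst M x)" "\<psi> x \<in> carrier_mat (fst M x) (fst M x)"
      and py: "\<phi> y \<in> carrier_mat (fst M y) (fst M y)" "\<psi> y \<in> carrier_mat (fst M y) (fst M y)"
      using p1 q1 xy by auto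
    have "\<psi> y * \<phi> y * snd M x y = \<psi> y * (\<phi> y * snd M x y)" using assoc_mult_mat[OF py(2) py(1) Mc] .
    also have "\<dots> = \<psi> y * (snd N x y * \<phi> x)" using p2 xy by auto
    also have "\<dots> = (\<psi> y * snd N x y) * \<phi> x" using assoc_mult_mat[OF py(2) Nc px(1)] by simp
    also have "\<dots> = (snd L x y * \<psi> x) * \<phi> x" using q2 xy by auto
    also have "\<dots> = snd L x y * (\<psi> x * \<phi> x)" using assoc_mult_mat[OF Lc px(2) px(1)] .
    finally show "\<psi> y * \<phi> y * snd M x y = snd L x y * (\<psi> x * \<phi> x)" .
  qed
qed

lemma pullback_pmod:
  assumes gi: "galois_insertion Q leQ f g" and pm: "is_pmod Q leQ \<Gamma>"
  shows "is_pmod UNIV (\<le>) (pullback g (\<Gamma> :: (nat, 'k::field) pmod))"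
  using assms unfolding galois_insertion_def is_pmod_def pullback_def by auto

lemma iso_restrict:
  assumes iso: "pmod_iso Q leQ \<Gamma> (\<Gamma>' :: (nat, 'k::field) pmod)"
    and gQ: "\<forall>x. g x \<in> Q" and gm: "\<forall>x y. x \<le> y \<longrightarrow> leQ (g x) (g y)"
  shows "pmod_iso UNIV (\<le>) (pullback (g :: 'p::order \<Rightarrow> nat) \<Gamma>) (pullback g \<Gamma>')"
proof -
  obtain \<phi> where p1: "\<forall>x\<in>Q. fst \<Gamma>' x = fst \<Gamma> x \<and> \<phi> x \<in> carrier_mat (fst \<Gamma> x) (fst \<Gamma> x) \<and> invertible_mat (\<phi> x)"
    and p2: "\<forall>x\<in>Q. \<forall>y\<in>Q. leQ x y \<longrightarrow> \<phi> y * snd \<Gamma> x y = snd \<Gamma>' x y * \<phi> x"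
    using iso unfolding pmod_iso_def by blast
  show ?thesis unfolding pmod_iso_def pullback_def
    by (rule exI[of _ "\<lambda>x. \<phi> (g x)"]) (use p1 p2 gQ gm in auto)
qed

lemma iso_transfer:
  assumes "\<forall>x\<in>A. fst P x = fst P' x" "\<forall>x\<in>A. \<forall>y\<in>A. lee x y \<longrightarrow> snd P x y = snd P' x y"
    and "pmod_iso A lee P' (L :: ('q, 'k::field) pmod)"
  shows "pmod_iso A lee P L"
  using assms unfolding pmod_iso_def by (metis (no_types, lifting))

definition conjm :: "('q \<Rightarrow> 'k::field mat) \<Rightarrow> ('q, 'k) pmod \<Rightarrow> ('q, 'k) pmod" where
  "conjm \<Phi> \<Gamma> = (fst \<Gamma>, \<lambda>u v. \<Phi> v * snd \<Gamma> u v * minv (\<Phi> u) (fst \<Gamma> u))"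

lemma conjm_props:
  assumes pm: "is_pmod Q leQ \<Gamma>"
    and \<Phi>: "\<forall>q\<in>Q. \<Phi> q \<in> carrier_mat (fst \<Gamma> q) (fst \<Gamma> q) \<and> invertible_mat (\<Phi> q)"
  shows "is_pmod Q leQ (conjm \<Phi> (\<Gamma> :: ('q, 'k::field) pmod))" "pmod_iso Q leQ \<Gamma> (conjm \<Phi> \<Gamma>)"
proof -
  have inv: "minv (\<Phi> q) (fst \<Gamma> q) \<in> carrier_mat (fst \<Gamma> q) (fst \<Gamma> q)"
    "\<Phi> q * minv (\<Phi> q) (fst \<Gamma> q) = 1\<^sub>m (fst \<Gamma> q)"
    "minv (\<Phi> q) (fst \<Gamma> q) * \<Phi> q = 1\<^sub>m (fst \<Gamma> q)"
    "\<Phi> q \<in> carrier_mat (fst \<Gamma> q) (fst \<Gamma> q)" if "q \<in> Q" for q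
    using minv_props[of "\<Phi> q" "fst \<Gamma> q"] \<Phi> that by auto
  have car: "snd \<Gamma> u v \<in> carrier_mat (fst \<Gamma> v) (fst \<Gamma> u)" if "u \<in> Q" "v \<in> Q" "leQ u v" for u v
    using pm that unfolding is_pmod_def by auto
  show "is_pmod Q leQ (conjm \<Phi> \<Gamma>)" unfolding is_pmod_def conjm_def fst_conv snd_conv
  proof (intro conjI ballI impI)
    fix x assume x: "x \<in> Q"
    have "snd \<Gamma> x x = 1\<^sub>m (fst \<Gamma> x)" using pm x unfolding is_pmod_def by auto
    then show "\<Phi> x * snd \<Gamma> x x * minv (\<Phi> x) (fst \<Gamma> x) = 1\<^sub>m (fst \<Gamma> x)"
      using inv[OF x] by simp
  next
    fix x y assume xy: "x \<in> Q" "y \<in> Q" "leQ x y"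
    show "\<Phi> y * snd \<Gamma> x y * minv (\<Phi> x) (fst \<Gamma> x) \<in> carrier_mat (fst \<Gamma> y) (fst \<Gamma> x)"
      using inv[OF xy(1)] inv[OF xy(2)] car[OF xy] by auto
  next
    fix x y z assume xyz: "x \<in> Q" "y \<in> Q" "z \<in> Q" "leQ x y \<and> leQ y z"
    note ix = inv[OF xyz(1)] and iy = inv[OF xyz(2)] and iz = inv[OF xyz(3)]
    have lxy: "leQ x y" and lyz: "leQ y z" using xyz by auto
    note X = car[OF xyz(1,2) lxy] and Y = car[OF xyz(2,3) lyz]
    have cY: "\<Phi> z * snd \<Gamma> y z \<in> carrier_mat (fst \<Gamma> z) (fst \<Gamma> y)" using iz Y xyz by auto
    have bX: "\<Phi> y * snd \<Gamma> x y \<in> carrier_mat (fst \<Gamma> y) (fst \<Gamma> x)" using iy X xyz by auto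
    have "(\<Phi> z * snd \<Gamma> y z * minv (\<Phi> y) (fst \<Gamma> y)) * (\<Phi> y * snd \<Gamma> x y * minv (\<Phi> x) (fst \<Gamma> x))
        = (\<Phi> z * snd \<Gamma> y z) * (minv (\<Phi> y) (fst \<Gamma> y) * (\<Phi> y * snd \<Gamma> x y * minv (\<Phi> x) (fst \<Gamma> x)))"
      using cY iy ix bX by (intro assoc_mult_mat) auto
    also have "minv (\<Phi> y) (fst \<Gamma> y) * (\<Phi> y * snd \<Gamma> x y * minv (\<Phi> x) (fst \<Gamma> x))
        = (minv (\<Phi> y) (fst \<Gamma> y) * (\<Phi> y * snd \<Gamma> x y)) * minv (\<Phi> x) (fst \<Gamma> x)"
      using iy ix bX by (intro assoc_mult_mat[symmetric]) auto
    also have "minv (\<Phi> y) (fst \<Gamma> y) * (\<Phi> y * snd \<Gamma> x y) = (minv (\<Phi> y) (fst \<Gamma> y) * \<Phi> y) * snd \<Gamma> x y"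
      using iy X by (intro assoc_mult_mat[symmetric]) auto
    also have "\<dots> = snd \<Gamma> x y" using iy X by simp
    also have "(\<Phi> z * snd \<Gamma> y z) * (snd \<Gamma> x y * minv (\<Phi> x) (fst \<Gamma> x))
        = ((\<Phi> z * snd \<Gamma> y z) * snd \<Gamma> x y) * minv (\<Phi> x) (fst \<Gamma> x)"
      using cY X ix by (intro assoc_mult_mat[symmetric]) auto
    also have "(\<Phi> z * snd \<Gamma> y z) * snd \<Gamma> x y = \<Phi> z * (snd \<Gamma> y z * snd \<Gamma> x y)"
      using iz X Y by (intro assoc_mult_mat) auto
    also have "snd \<Gamma> y z * snd \<Gamma> x y = snd \<Gamma> x z" using pm xyz unfolding is_pmod_def by auto
    finally show "\<Phi> z * snd \<Gamma> x z * minv (\<Phi> x) (fst \<Gamma> x) =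
       \<Phi> z * snd \<Gamma> y z * minv (\<Phi> y) (fst \<Gamma> y) * (\<Phi> y * snd \<Gamma> x y * minv (\<Phi> x) (fst \<Gamma> x))" by simp
  qed
  show "pmod_iso Q leQ \<Gamma> (conjm \<Phi> \<Gamma>)" unfolding pmod_iso_def conjm_def fst_conv snd_conv
  proof (intro exI[of _ \<Phi>] conjI ballI impI)
    fix x y assume xy: "x \<in> Q" "y \<in> Q" "leQ x y"
    have bX: "\<Phi> y * snd \<Gamma> x y \<in> carrier_mat (fst \<Gamma> y) (fst \<Gamma> x)" using inv[OF xy(2)] car[OF xy] by auto
    have "\<Phi> y * snd \<Gamma> x y * minv (\<Phi> x) (fst \<Gamma> x) * \<Phi> x
       = (\<Phi> y * snd \<Gamma> x y) * (minv (\<Phi> x) (fst \<Gamma> x) * \<Phi> x)"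
      using bX inv[OF xy(1)] by (intro assoc_mult_mat) auto
    then show "\<Phi> y * snd \<Gamma> x y = \<Phi> y * snd \<Gamma> x y * minv (\<Phi> x) (fst \<Gamma> x) * \<Phi> x"
      using inv[OF xy(1)] right_mult_one_mat[OF bX] by simp
  qed (use \<Phi> in auto)
qed

locale glue =
  fixes Q1 :: "nat set" and le1 :: "nat \<Rightarrow> nat \<Rightarrow> bool" and f1 :: "nat \<Rightarrow> 'p::order"
    and g1 :: "'p \<Rightarrow> nat" and h1 :: "nat \<Rightarrow> 'p" and i1 :: "'p \<Rightarrow> nat" and \<Gamma>1 :: "(nat, 'k::field) pmod"
    and Q2 :: "nat set" and le2 :: "nat \<Rightarrow> nat \<Rightarrow> bool" and f2 :: "nat \<Rightarrow> 'p"
    and g2 :: "'p \<Rightarrow> nat" and h2 :: "nat \<Rightarrow> 'p" and i2 :: "'p \<Rightarrow> nat" and \<Gamma>2 :: "(nat, 'k) pmod"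
  assumes fp1: "finite_poset Q1 le1" and gf1: "galois_insertion Q1 le1 f1 g1"
    and gh1: "galois_insertion Q1 le1 h1 i1" and pm1: "is_pmod Q1 le1 \<Gamma>1"
    and fp2: "finite_poset Q2 le2" and gf2: "galois_insertion Q2 le2 f2 g2"
    and gh2: "galois_insertion Q2 le2 h2 i2" and pm2: "is_pmod Q2 le2 \<Gamma>2"
    and agd: "\<And>y. fst \<Gamma>2 (g2 y) = fst \<Gamma>1 (i1 y)"
    and agm: "\<And>y y'. y \<le> y' \<Longrightarrow> snd \<Gamma>2 (g2 y) (g2 y') = snd \<Gamma>1 (i1 y) (i1 y')"
begin

lemma inQ: "g1 y \<in> Q1" "i1 y \<in> Q1" "g2 y \<in> Q2" "i2 y \<in> Q2"
  using gf1 gh1 gf2 gh2 unfolding galois_insertion_def by auto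

lemma refl1: "a \<in> Q1 \<Longrightarrow> le1 a a" and refl2: "b \<in> Q2 \<Longrightarrow> le2 b b"
  using fp1 fp2 unfolding finite_poset_def by auto

lemma trans1: "a \<in> Q1 \<Longrightarrow> b \<in> Q1 \<Longrightarrow> c \<in> Q1 \<Longrightarrow> le1 a b \<Longrightarrow> le1 b c \<Longrightarrow> le1 a c"
  and trans2: "a \<in> Q2 \<Longrightarrow> b \<in> Q2 \<Longrightarrow> c \<in> Q2 \<Longrightarrow> le2 a b \<Longrightarrow> le2 b c \<Longrightarrow> le2 a c"
  using fp1 fp2 unfolding finite_poset_def by blast+

lemma antisym1: "a \<in> Q1 \<Longrightarrow> b \<in> Q1 \<Longrightarrow> le1 a b \<Longrightarrow> le1 b a \<Longrightarrow> a = b"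
  and antisym2: "a \<in> Q2 \<Longrightarrow> b \<in> Q2 \<Longrightarrow> le2 a b \<Longrightarrow> le2 b a \<Longrightarrow> a = b"
  using fp1 fp2 unfolding finite_poset_def by blast+

lemma adj: "a \<in> Q1 \<Longrightarrow> f1 a \<le> x \<longleftrightarrow> le1 a (g1 x)" "a \<in> Q1 \<Longrightarrow> h1 a \<le> x \<longleftrightarrow> le1 a (i1 x)"
  "b \<in> Q2 \<Longrightarrow> f2 b \<le> x \<longleftrightarrow> le2 b (g2 x)" "b \<in> Q2 \<Longrightarrow> h2 b \<le> x \<longleftrightarrow> le2 b (i2 x)"
  using gf1 gh1 gf2 gh2 unfolding galois_insertion_def by auto

lemma monoQ: "a \<in> Q1 \<Longrightarrow> b \<in> Q1 \<Longrightarrow> le1 a b \<Longrightarrow> f1 a \<le> f1 b"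
  "a \<in> Q1 \<Longrightarrow> b \<in> Q1 \<Longrightarrow> le1 a b \<Longrightarrow> h1 a \<le> h1 b"
  "a \<in> Q2 \<Longrightarrow> b \<in> Q2 \<Longrightarrow> le2 a b \<Longrightarrow> f2 a \<le> f2 b"
  "a \<in> Q2 \<Longrightarrow> b \<in> Q2 \<Longrightarrow> le2 a b \<Longrightarrow> h2 a \<le> h2 b"
  using gf1 gh1 gf2 gh2 unfolding galois_insertion_def by auto

lemma monoP: "x \<le> y \<Longrightarrow> le1 (g1 x) (g1 y)" "x \<le> y \<Longrightarrow> le1 (i1 x) (i1 y)"
  "x \<le> y \<Longrightarrow> le2 (g2 x) (g2 y)" "x \<le> y \<Longrightarrow> le2 (i2 x) (i2 y)"
  using gf1 gh1 gf2 gh2 unfolding galois_insertion_def by auto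

lemma retr[simp]: "f1 (g1 x) = x" "h1 (i1 x) = x" "f2 (g2 x) = x" "h2 (i2 x) = x"
  using gf1 gh1 gf2 gh2 unfolding galois_insertion_def by auto

lemma unit1: "a \<in> Q1 \<Longrightarrow> le1 a (i1 (h1 a))"
  using adj(2)[of a "h1 a"] by auto
lemma unit2: "b \<in> Q2 \<Longrightarrow> le2 b (g2 (f2 b))"
  using adj(3)[of b "f2 b"] by auto

lemma car1: "a \<in> Q1 \<Longrightarrow> b \<in> Q1 \<Longrightarrow> le1 a b \<Longrightarrow> snd \<Gamma>1 a b \<in> carrier_mat (fst \<Gamma>1 b) (fst \<Gamma>1 a)"
  and car2: "a \<in> Q2 \<Longrightarrow> b \<in> Q2 \<Longrightarrow> le2 a b \<Longrightarrow> snd \<Gamma>2 a b \<in> carrier_mat (fst \<Gamma>2 b) (fst \<Gamma>2 a)"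
  using pm1 pm2 unfolding is_pmod_def by auto

lemma id1: "a \<in> Q1 \<Longrightarrow> snd \<Gamma>1 a a = 1\<^sub>m (fst \<Gamma>1 a)"
  and id2: "a \<in> Q2 \<Longrightarrow> snd \<Gamma>2 a a = 1\<^sub>m (fst \<Gamma>2 a)"
  using pm1 pm2 unfolding is_pmod_def by auto

lemma comp1: "a \<in> Q1 \<Longrightarrow> b \<in> Q1 \<Longrightarrow> c \<in> Q1 \<Longrightarrow> le1 a b \<Longrightarrow> le1 b c \<Longrightarrow> snd \<Gamma>1 a c = snd \<Gamma>1 b c * snd \<Gamma>1 a b"
  and comp2: "a \<in> Q2 \<Longrightarrow> b \<in> Q2 \<Longrightarrow> c \<in> Q2 \<Longrightarrow> le2 a b \<Longrightarrow> le2 b c \<Longrightarrow> snd \<Gamma>2 a c = snd \<Gamma>2 b c * snd \<Gamma>2 a b"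
  using pm1 pm2 unfolding is_pmod_def by blast+

definition S :: "(nat \<times> nat) set" where
  "S = (\<lambda>a. (a, g2 (h1 a))) ` Q1 \<union> (\<lambda>b. (i1 (f2 b), b)) ` Q2"

definition le :: "nat \<times> nat \<Rightarrow> nat \<times> nat \<Rightarrow> bool" where
  "le p q \<longleftrightarrow> le1 (fst p) (fst q) \<and> le2 (snd p) (snd q)"

definition isA :: "nat \<times> nat \<Rightarrow> bool" where "isA p \<longleftrightarrow> snd p = g2 (h1 (fst p))"
definition isB :: "nat \<times> nat \<Rightarrow> bool" where "isB p \<longleftrightarrow> fst p = i1 (f2 (snd p))"

definition ov :: "'p \<Rightarrow> nat \<times> nat" where "ov y = (i1 y, g2 y)"

definition dimG :: "nat \<times> nat \<Rightarrow> nat" where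
  "dimG p = (if isA p then fst \<Gamma>1 (fst p) else fst \<Gamma>2 (snd p))"

definition mapG :: "nat \<times> nat \<Rightarrow> nat \<times> nat \<Rightarrow> 'k mat" where
  "mapG p q = (if isA p then (if isA q then snd \<Gamma>1 (fst p) (fst q)
        else snd \<Gamma>2 (g2 (h1 (fst p))) (snd q) * snd \<Gamma>1 (fst p) (i1 (h1 (fst p))))
      else (if isA q then snd \<Gamma>1 (i1 (f2 (snd p))) (fst q) * snd \<Gamma>2 (snd p) (g2 (f2 (snd p)))
        else snd \<Gamma>2 (snd p) (snd q)))"

lemma S_Q: "p \<in> S \<Longrightarrow> fst p \<in> Q1" "p \<in> S \<Longrightarrow> snd p \<in> Q2"
  unfolding S_def using inQ by auto

lemma S_h: "p \<in> S \<Longrightarrow> h1 (fst p) = f2 (snd p)"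
  unfolding S_def by auto

lemma S_AB: "p \<in> S \<Longrightarrow> isA p \<or> isB p"
  unfolding S_def isA_def isB_def by auto

lemma S_notA: "p \<in> S \<Longrightarrow> \<not> isA p \<Longrightarrow> isB p"
  using S_AB by blast

lemma ov_props: "ov y \<in> S" "isA (ov y)" "isB (ov y)" "fst (ov y) = i1 y" "snd (ov y) = g2 y"
  unfolding ov_def S_def isA_def isB_def using inQ by auto

lemma ov_eq: "p \<in> S \<Longrightarrow> isA p \<Longrightarrow> isB p \<Longrightarrow> p = ov (h1 (fst p))"
  unfolding ov_def isA_def isB_def using S_h by (cases p) auto

lemma le_refl: "p \<in> S \<Longrightarrow> le p p"
  unfolding le_def using S_Q refl1 refl2 by auto

lemma le_trans: "p \<in> S \<Longrightarrow> q \<in> S \<Longrightarrow> r \<in> S \<Longrightarrow> le p q \<Longrightarrow> le q r \<Longrightarrow> le p r"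
proof -
  assume a: "p \<in> S" "q \<in> S" "r \<in> S" "le p q" "le q r"
  have "le1 (fst p) (fst r)" using trans1[OF S_Q(1)[OF a(1)] S_Q(1)[OF a(2)] S_Q(1)[OF a(3)]] a(4,5) unfolding le_def by blast
  moreover have "le2 (snd p) (snd r)" using trans2[OF S_Q(2)[OF a(1)] S_Q(2)[OF a(2)] S_Q(2)[OF a(3)]] a(4,5) unfolding le_def by blast
  ultimately show "le p r" unfolding le_def by simp
qed

lemma le_antisym: "p \<in> S \<Longrightarrow> q \<in> S \<Longrightarrow> le p q \<Longrightarrow> le q p \<Longrightarrow> p = q"
proof -
  assume a: "p \<in> S" "q \<in> S" "le p q" "le q p"
  have "fst p = fst q" using antisym1[OF S_Q(1)[OF a(1)] S_Q(1)[OF a(2)]] a(3,4) unfolding le_def by blast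
  moreover have "snd p = snd q" using antisym2[OF S_Q(2)[OF a(1)] S_Q(2)[OF a(2)]] a(3,4) unfolding le_def by blast
  ultimately show "p = q" by (rule prod_eqI)
qed

definition c :: "nat \<times> nat \<Rightarrow> nat \<times> nat" where "c p = ov (h1 (fst p))"

lemma c_above: "p \<in> S \<Longrightarrow> le p (c p)"
proof -
  assume p: "p \<in> S"
  have "le2 (snd p) (g2 (h1 (fst p)))" using unit2[OF S_Q(2)[OF p]] S_h[OF p] by simp
  then show ?thesis using unit1[OF S_Q(1)[OF p]] unfolding c_def le_def ov_def by simp
qed

lemma c_least: "p \<in> S \<Longrightarrow> le p (ov y) \<Longrightarrow> le (c p) (ov y)"
proof -
  assume p: "p \<in> S" "le p (ov y)"
  then have "le1 (fst p) (i1 y)" unfolding le_def ov_def by simp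
  then have "h1 (fst p) \<le> y" using adj(2)[OF S_Q(1)[OF p(1)]] by simp
  then show ?thesis using monoP unfolding c_def le_def ov_def by simp
qed

lemma ov_le: "le (ov y) (ov y') \<longleftrightarrow> y \<le> y'"
proof
  assume "le (ov y) (ov y')"
  then have "le1 (i1 y) (i1 y')" unfolding le_def ov_def by simp
  then show "y \<le> y'" using adj(2)[OF inQ(2)] by simp
next
  assume "y \<le> y'" then show "le (ov y) (ov y')" unfolding le_def ov_def using monoP by simp
qed

lemma mixed_c:
  assumes p: "p \<in> S" and r: "r \<in> S" and pr: "le p r" and ne: "isA p \<noteq> isA r"
  shows "le (c p) r"
proof -
  have hh: "h1 (fst p) \<le> h1 (fst r)" using pr monoQ(2) S_Q p r unfolding le_def by auto
  show ?thesis
  proof (cases "isA p")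
    case True
    then have B: "fst r = i1 (f2 (snd r))" using ne r S_notA unfolding isB_def by auto
    have "h1 (fst r) = f2 (snd r)" using S_h r by auto
    then have 1: "le1 (i1 (h1 (fst p))) (fst r)" using B monoP(2)[OF hh] by simp
    have 2: "le2 (g2 (h1 (fst p))) (snd r)" using True pr unfolding isA_def le_def by simp
    show ?thesis using 1 2 unfolding c_def le_def ov_def by simp
  next
    case False
    then have B: "fst p = i1 (f2 (snd p))" and A: "snd r = g2 (h1 (fst r))"
      using ne p S_notA unfolding isB_def isA_def by auto
    have "h1 (fst p) = f2 (snd p)" using S_h p by auto
    then have 1: "le1 (i1 (h1 (fst p))) (fst r)" using B pr unfolding le_def by simp
    have 2: "le2 (g2 (h1 (fst p))) (snd r)" using A monoP(3)[OF hh] by simp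
    show ?thesis using 1 2 unfolding c_def le_def ov_def by simp
  qed
qed

lemma c_S: "c p \<in> S" "isA (c p)" "isB (c p)"
  unfolding c_def using ov_props by auto

abbreviation "M1 \<equiv> snd \<Gamma>1"
abbreviation "M2 \<equiv> snd \<Gamma>2"
abbreviation "D1 \<equiv> fst \<Gamma>1"
abbreviation "D2 \<equiv> fst \<Gamma>2"

lemma le_D: "le p q \<Longrightarrow> le1 (fst p) (fst q)" "le p q \<Longrightarrow> le2 (snd p) (snd q)"
  unfolding le_def by auto

lemma ag: "le (ov z) (ov y) \<Longrightarrow> M2 (g2 z) (g2 y) = M1 (i1 z) (i1 y)"
  using agm ov_le by auto

lemma ov_split: "p \<in> S \<Longrightarrow> isA p \<Longrightarrow> isB p \<Longrightarrow> fst p = i1 (h1 (fst p)) \<and> snd p = g2 (h1 (fst p))"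
  using S_h unfolding isA_def isB_def by auto

lemma dimG_A: "isA p \<Longrightarrow> dimG p = D1 (fst p)"
  unfolding dimG_def by simp

lemma dimG_B: "p \<in> S \<Longrightarrow> isB p \<Longrightarrow> dimG p = D2 (snd p)"
proof -
  assume p: "p \<in> S" "isB p"
  show ?thesis
  proof (cases "isA p")
    case True
    then obtain y where "fst p = i1 y" "snd p = g2 y" using ov_split p by blast
    then show ?thesis using True agd[of y] unfolding dimG_def by simp
  qed (simp add: dimG_def)
qed

lemma map_AA: "isA p \<Longrightarrow> isA q \<Longrightarrow> mapG p q = M1 (fst p) (fst q)"
  unfolding mapG_def by simp

lemma map_BB:
  assumes p: "p \<in> S" and q: "q \<in> S" and Bp: "isB p" and Bq: "isB q" and pq: "le p q"
  shows "mapG p q = M2 (snd p) (snd q)"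
proof (cases "isA p")
  case Ap: True
  obtain y where fp: "fst p = i1 y" "snd p = g2 y" using ov_split[OF p Ap Bp] by blast
  show ?thesis
  proof (cases "isA q")
    case Aq: True
    obtain y' where fq: "fst q = i1 y'" "snd q = g2 y'" using ov_split[OF q Aq Bq] by blast
    have "y \<le> y'" using le_D(1)[OF pq] fp fq adj(2)[OF inQ(2)] by simp
    then show ?thesis using map_AA[OF Ap Aq] agm fp fq by simp
  next
    case nAq: False
    have "mapG p q = M2 (g2 y) (snd q) * M1 (i1 y) (i1 y)"
      unfolding mapG_def using Ap nAq fp by simp
    also have "M1 (i1 y) (i1 y) = 1\<^sub>m (D1 (i1 y))" using id1 inQ by auto
    also have "M2 (g2 y) (snd q) \<in> carrier_mat (D2 (snd q)) (D1 (i1 y))"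
      using car2[OF inQ(3) S_Q(2)[OF q], of y] le_D(2)[OF pq] fp agd[of y] by simp
    then have "M2 (g2 y) (snd q) * 1\<^sub>m (D1 (i1 y)) = M2 (g2 y) (snd q)" by simp
    finally show ?thesis using fp by simp
  qed
next
  case nAp: False
  show ?thesis
  proof (cases "isA q")
    case Aq: True
    obtain y' where fq: "fst q = i1 y'" "snd q = g2 y'" using ov_split[OF q Aq Bq] by blast
    define z where "z = f2 (snd p)"
    have Q: "snd p \<in> Q2" using S_Q p by auto
    have l1: "le2 (snd p) (g2 z)" using unit2[OF Q] z_def by simp
    have "le2 (snd p) (g2 y')" using le_D(2)[OF pq] fq by simp
    then have zy: "z \<le> y'" using adj(3)[OF Q] z_def by simp
    have "mapG p q = M1 (i1 z) (i1 y') * M2 (snd p) (g2 z)"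
      unfolding mapG_def using nAp Aq fq z_def by simp
    also have "M1 (i1 z) (i1 y') = M2 (g2 z) (g2 y')" using agm[OF zy] by simp
    also have "M2 (g2 z) (g2 y') * M2 (snd p) (g2 z) = M2 (snd p) (g2 y')"
      using comp2[OF Q inQ(3) inQ(3) l1 monoP(3)[OF zy]] by simp
    finally show ?thesis using fq by simp
  next
    case False
    then show ?thesis unfolding mapG_def using nAp by simp
  qed
qed

lemma map_AnA: "isA p \<Longrightarrow> \<not> isA q \<Longrightarrow>
    mapG p q = M2 (g2 (h1 (fst p))) (snd q) * M1 (fst p) (i1 (h1 (fst p)))"
  unfolding mapG_def by simp

lemma map_nAA: "p \<in> S \<Longrightarrow> \<not> isA p \<Longrightarrow> isA q \<Longrightarrow>
    mapG p q = M1 (i1 (h1 (fst p))) (fst q) * M2 (snd p) (g2 (h1 (fst p)))"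
  unfolding mapG_def using S_h by simp

lemma car1': "a \<in> Q1 \<Longrightarrow> le1 a (i1 z) \<Longrightarrow> M1 a (i1 z) \<in> carrier_mat (D2 (g2 z)) (D1 a)"
  using car1[OF _ inQ(2)] agd by simp

lemma car2': "b \<in> Q2 \<Longrightarrow> le2 b (g2 z) \<Longrightarrow> M2 b (g2 z) \<in> carrier_mat (D1 (i1 z)) (D2 b)"
  using car2[OF _ inQ(3)] agd by simp

lemma car1'': "a \<in> Q1 \<Longrightarrow> le1 (i1 z) a \<Longrightarrow> M1 (i1 z) a \<in> carrier_mat (D1 a) (D2 (g2 z))"
  using car1[OF inQ(2)] agd by simp

lemma car2'': "b \<in> Q2 \<Longrightarrow> le2 (g2 z) b \<Longrightarrow> M2 (g2 z) b \<in> carrier_mat (D2 b) (D1 (i1 z))"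
  using car2[OF inQ(3)] agd by simp

lemma mapG_car:
  assumes p: "p \<in> S" and q: "q \<in> S" and pq: "le p q"
  shows "mapG p q \<in> carrier_mat (dimG q) (dimG p)"
proof -
  have P: "fst p \<in> Q1" "snd p \<in> Q2" and Q: "fst q \<in> Q1" "snd q \<in> Q2" using S_Q p q by auto
  consider "isA p" "isA q" | "\<not> isA p" "\<not> isA q" | "isA p" "\<not> isA q" | "\<not> isA p" "isA q" by blast
  then show ?thesis
  proof cases
    case 1 then show ?thesis using map_AA dimG_A car1[OF P(1) Q(1) le_D(1)[OF pq]] by simp
  next
    case 2
    then have "isB p" "isB q" using S_notA p q by auto
    then show ?thesis using map_BB[OF p q _ _ pq] dimG_B p q car2[OF P(2) Q(2) le_D(2)[OF pq]] by simp
  next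
    case 3
    define z where "z = h1 (fst p)"
    have cq: "le (ov z) q" using mixed_c[OF p q pq] 3 unfolding c_def z_def by simp
    have a: "M2 (g2 z) (snd q) \<in> carrier_mat (D2 (snd q)) (D1 (i1 z))"
      using car2''[OF Q(2)] le_D(2)[OF cq] ov_props by simp
    have b: "M1 (fst p) (i1 z) \<in> carrier_mat (D1 (i1 z)) (D1 (fst p))"
      using car1[OF P(1) inQ(2) unit1[OF P(1)]] z_def by simp
    show ?thesis using map_AnA[OF 3] a b 3 dimG_A unfolding z_def dimG_def by auto
  next
    case 4
    define z where "z = h1 (fst p)"
    have cq: "le (ov z) q" using mixed_c[OF p q pq] 4 unfolding c_def z_def by simp
    have a: "M1 (i1 z) (fst q) \<in> carrier_mat (D1 (fst q)) (D2 (g2 z))"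
      using car1''[OF Q(1)] le_D(1)[OF cq] ov_props by simp
    have b: "M2 (snd p) (g2 z) \<in> carrier_mat (D2 (g2 z)) (D2 (snd p))"
      using car2[OF P(2) inQ(3) unit2[OF P(2)]] z_def S_h[OF p] by simp
    show ?thesis using map_nAA[OF p 4] a b 4 unfolding z_def dimG_def by auto
  qed
qed

lemma F2:
  assumes p: "p \<in> S" and r: "r \<in> S" and po: "le p (ov y)" and or: "le (ov y) r"
  shows "mapG p r = mapG (ov y) r * mapG p (ov y)"
proof -
  note o = ov_props[of y]
  have P: "fst p \<in> Q1" "snd p \<in> Q2" and R: "fst r \<in> Q1" "snd r \<in> Q2" using S_Q p r by auto
  have lpr: "le p r" using le_trans[OF p o(1) r po or] .
  have po1: "le1 (fst p) (i1 y)" and po2: "le2 (snd p) (g2 y)" using le_D[OF po] o by auto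
  have or1: "le1 (i1 y) (fst r)" and or2: "le2 (g2 y) (snd r)" using le_D[OF or] o by auto
  define z where "z = h1 (fst p)"
  have zy: "z \<le> y" using adj(2)[OF P(1)] po1 z_def by simp
  have hz: "f2 (snd p) = z" using S_h[OF p] z_def by simp
  consider "isA p" "isA r" | "\<not> isA p" "\<not> isA r" | "isA p" "\<not> isA r" | "\<not> isA p" "isA r" by blast
  then show ?thesis
  proof cases
    case 1
    then show ?thesis using map_AA o comp1[OF P(1) inQ(2) R(1) po1 or1] by simp
  next
    case 2
    then have B: "isB p" "isB r" using S_notA p r by auto
    show ?thesis using map_BB[OF p r B lpr] map_BB[OF p o(1) B(1) o(3) po] map_BB[OF o(1) r o(3) B(2) or]
      comp2[OF P(2) inQ(3) R(2) po2 or2] o by simp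
  next
    case 3
    have B: "isB r" using S_notA r 3 by auto
    have l1: "le1 (fst p) (i1 z)" using unit1[OF P(1)] z_def by simp
    have a: "M2 (g2 y) (snd r) \<in> carrier_mat (D2 (snd r)) (D2 (g2 y))" using car2[OF inQ(3) R(2) or2] .
    have b: "M2 (g2 z) (g2 y) \<in> carrier_mat (D2 (g2 y)) (D2 (g2 z))" using car2[OF inQ(3) inQ(3) monoP(3)[OF zy]] .
    have cc: "M1 (fst p) (i1 z) \<in> carrier_mat (D2 (g2 z)) (D1 (fst p))" using car1'[OF P(1) l1] .
    have "mapG (ov y) r * mapG p (ov y) = M2 (g2 y) (snd r) * M1 (fst p) (i1 y)"
      using map_BB[OF o(1) r o(3) B or] map_AA[OF 3(1) o(2)] o by simp
    also have "M1 (fst p) (i1 y) = M1 (i1 z) (i1 y) * M1 (fst p) (i1 z)"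
      using comp1[OF P(1) inQ(2) inQ(2) l1 monoP(2)[OF zy]] .
    also have "M1 (i1 z) (i1 y) = M2 (g2 z) (g2 y)" using agm[OF zy] by simp
    also have "M2 (g2 y) (snd r) * (M2 (g2 z) (g2 y) * M1 (fst p) (i1 z))
        = (M2 (g2 y) (snd r) * M2 (g2 z) (g2 y)) * M1 (fst p) (i1 z)"
      using assoc_mult_mat[OF a b cc] by simp
    also have "M2 (g2 y) (snd r) * M2 (g2 z) (g2 y) = M2 (g2 z) (snd r)"
      using comp2[OF inQ(3) inQ(3) R(2) monoP(3)[OF zy] or2] by simp
    also have "M2 (g2 z) (snd r) * M1 (fst p) (i1 z) = mapG p r"
      using map_AnA[OF 3] z_def by simp
    finally show ?thesis by simp
  next
    case 4
    have B: "isB p" using S_notA p 4 by auto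
    have l2: "le2 (snd p) (g2 z)" using unit2[OF P(2)] hz by simp
    have a: "M1 (i1 y) (fst r) \<in> carrier_mat (D1 (fst r)) (D1 (i1 y))" using car1[OF inQ(2) R(1) or1] .
    have b: "M1 (i1 z) (i1 y) \<in> carrier_mat (D1 (i1 y)) (D1 (i1 z))" using car1[OF inQ(2) inQ(2) monoP(2)[OF zy]] .
    have cc: "M2 (snd p) (g2 z) \<in> carrier_mat (D1 (i1 z)) (D2 (snd p))" using car2'[OF P(2) l2] .
    have "mapG (ov y) r * mapG p (ov y) = M1 (i1 y) (fst r) * M2 (snd p) (g2 y)"
      using map_BB[OF p o(1) B o(3) po] map_AA[OF o(2) 4(2)] o by simp
    also have "M2 (snd p) (g2 y) = M2 (g2 z) (g2 y) * M2 (snd p) (g2 z)"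
      using comp2[OF P(2) inQ(3) inQ(3) l2 monoP(3)[OF zy]] .
    also have "M2 (g2 z) (g2 y) = M1 (i1 z) (i1 y)" using agm[OF zy] by simp
    also have "M1 (i1 y) (fst r) * (M1 (i1 z) (i1 y) * M2 (snd p) (g2 z))
        = (M1 (i1 y) (fst r) * M1 (i1 z) (i1 y)) * M2 (snd p) (g2 z)"
      using assoc_mult_mat[OF a b cc] by simp
    also have "M1 (i1 y) (fst r) * M1 (i1 z) (i1 y) = M1 (i1 z) (fst r)"
      using comp1[OF inQ(2) inQ(2) R(1) monoP(2)[OF zy] or1] by simp
    also have "M1 (i1 z) (fst r) * M2 (snd p) (g2 z) = mapG p r"
      using map_nAA[OF p 4] z_def hz by simp
    finally show ?thesis by simp
  qed
qed

lemma F1: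
  assumes q: "q \<in> S" and r: "r \<in> S" and oq: "le (ov y) q" and qr: "le q r"
  shows "mapG (ov y) r = mapG q r * mapG (ov y) q"
proof -
  note o = ov_props[of y]
  have Q: "fst q \<in> Q1" "snd q \<in> Q2" and R: "fst r \<in> Q1" "snd r \<in> Q2" using S_Q q r by auto
  have lor: "le (ov y) r" using le_trans[OF o(1) q r oq qr] .
  have oq1: "le1 (i1 y) (fst q)" and oq2: "le2 (g2 y) (snd q)" using le_D[OF oq] o by auto
  have qr1: "le1 (fst q) (fst r)" and qr2: "le2 (snd q) (snd r)" using le_D[OF qr] by auto
  define z where "z = h1 (fst q)"
  have hz: "f2 (snd q) = z" using S_h[OF q] z_def by simp
  have qz: "le q (ov z)" using c_above[OF q] unfolding c_def z_def .
  have yz: "y \<le> z" using ov_le le_trans[OF o(1) q ov_props(1) oq qz] by simp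
  consider "isA q" "isA r" | "\<not> isA q" "\<not> isA r" | "isA q" "\<not> isA r" | "\<not> isA q" "isA r" by blast
  then show ?thesis
  proof cases
    case 1
    then show ?thesis using map_AA o comp1[OF inQ(2) Q(1) R(1) oq1 qr1] by simp
  next
    case 2
    then have B: "isB q" "isB r" using S_notA q r by auto
    show ?thesis using map_BB[OF q r B qr] map_BB[OF o(1) q o(3) B(1) oq] map_BB[OF o(1) r o(3) B(2) lor]
      comp2[OF inQ(3) Q(2) R(2) oq2 qr2] o by simp
  next
    case 3
    have B: "isB r" using S_notA r 3 by auto
    have zr: "le (ov z) r" using mixed_c[OF q r qr] 3 unfolding c_def z_def by simp
    have zr2: "le2 (g2 z) (snd r)" using le_D(2)[OF zr] ov_props by simp
    have l1: "le1 (fst q) (i1 z)" using unit1[OF Q(1)] z_def by simp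
    have a: "M2 (g2 z) (snd r) \<in> carrier_mat (D2 (snd r)) (D2 (g2 z))" using car2[OF inQ(3) R(2) zr2] .
    have b: "M1 (fst q) (i1 z) \<in> carrier_mat (D2 (g2 z)) (D1 (fst q))" using car1'[OF Q(1) l1] .
    have cc: "M1 (i1 y) (fst q) \<in> carrier_mat (D1 (fst q)) (D1 (i1 y))" using car1[OF inQ(2) Q(1) oq1] .
    have "mapG q r * mapG (ov y) q = (M2 (g2 z) (snd r) * M1 (fst q) (i1 z)) * M1 (i1 y) (fst q)"
      using map_AnA[OF 3] map_AA[OF o(2) 3(1)] o z_def by simp
    also have "\<dots> = M2 (g2 z) (snd r) * (M1 (fst q) (i1 z) * M1 (i1 y) (fst q))"
      using assoc_mult_mat[OF a b cc] .
    also have "M1 (fst q) (i1 z) * M1 (i1 y) (fst q) = M1 (i1 y) (i1 z)"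
      using comp1[OF inQ(2) Q(1) inQ(2) oq1 l1] by simp
    also have "M1 (i1 y) (i1 z) = M2 (g2 y) (g2 z)" using agm[OF yz] by simp
    also have "M2 (g2 z) (snd r) * M2 (g2 y) (g2 z) = M2 (g2 y) (snd r)"
      using comp2[OF inQ(3) inQ(3) R(2) monoP(3)[OF yz] zr2] by simp
    also have "M2 (g2 y) (snd r) = mapG (ov y) r"
      using map_BB[OF o(1) r o(3) B lor] o by simp
    finally show ?thesis by simp
  next
    case 4
    have B: "isB q" using S_notA q 4 by auto
    have zr: "le (ov z) r" using mixed_c[OF q r qr] 4 unfolding c_def z_def by simp
    have zr1: "le1 (i1 z) (fst r)" using le_D(1)[OF zr] ov_props by simp
    have l2: "le2 (snd q) (g2 z)" using unit2[OF Q(2)] hz by simp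
    have a: "M1 (i1 z) (fst r) \<in> carrier_mat (D1 (fst r)) (D1 (i1 z))" using car1[OF inQ(2) R(1) zr1] .
    have b: "M2 (snd q) (g2 z) \<in> carrier_mat (D1 (i1 z)) (D2 (snd q))" using car2'[OF Q(2) l2] .
    have cc: "M2 (g2 y) (snd q) \<in> carrier_mat (D2 (snd q)) (D2 (g2 y))" using car2[OF inQ(3) Q(2) oq2] .
    have "mapG q r * mapG (ov y) q = (M1 (i1 z) (fst r) * M2 (snd q) (g2 z)) * M2 (g2 y) (snd q)"
      using map_nAA[OF q 4] map_BB[OF o(1) q o(3) B oq] o z_def by simp
    also have "\<dots> = M1 (i1 z) (fst r) * (M2 (snd q) (g2 z) * M2 (g2 y) (snd q))"
      using assoc_mult_mat[OF a b cc] .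
    also have "M2 (snd q) (g2 z) * M2 (g2 y) (snd q) = M2 (g2 y) (g2 z)"
      using comp2[OF inQ(3) Q(2) inQ(3) oq2 l2] by simp
    also have "M2 (g2 y) (g2 z) = M1 (i1 y) (i1 z)" using agm[OF yz] by simp
    also have "M1 (i1 z) (fst r) * M1 (i1 y) (i1 z) = M1 (i1 y) (fst r)"
      using comp1[OF inQ(2) inQ(2) R(1) monoP(2)[OF yz] zr1] by simp
    also have "M1 (i1 y) (fst r) = mapG (ov y) r"
      using map_AA[OF o(2) 4(2)] o by simp
    finally show ?thesis by simp
  qed
qed

lemma F3:
  assumes p: "p \<in> S" and q: "q \<in> S" and pq: "le p q" and qo: "le q (ov y)"
  shows "mapG p (ov y) = mapG q (ov y) * mapG p q"
proof -
  note o = ov_props[of y]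
  have P: "fst p \<in> Q1" "snd p \<in> Q2" and Q: "fst q \<in> Q1" "snd q \<in> Q2" using S_Q p q by auto
  have lpo: "le p (ov y)" using le_trans[OF p q o(1) pq qo] .
  have qo1: "le1 (fst q) (i1 y)" and qo2: "le2 (snd q) (g2 y)" using le_D[OF qo] o by auto
  have pq1: "le1 (fst p) (fst q)" and pq2: "le2 (snd p) (snd q)" using le_D[OF pq] by auto
  define z where "z = h1 (fst p)"
  have hz: "f2 (snd p) = z" using S_h[OF p] z_def by simp
  have zy: "z \<le> y" using c_least[OF p lpo] ov_le unfolding c_def z_def by simp
  consider "isA p" "isA q" | "\<not> isA p" "\<not> isA q" | "isA p" "\<not> isA q" | "\<not> isA p" "isA q" by blast
  then show ?thesis
  proof cases
    case 1
    then show ?thesis using map_AA o comp1[OF P(1) Q(1) inQ(2) pq1 qo1] by simp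
  next
    case 2
    then have B: "isB p" "isB q" using S_notA p q by auto
    show ?thesis using map_BB[OF p q B pq] map_BB[OF p o(1) B(1) o(3) lpo] map_BB[OF q o(1) B(2) o(3) qo]
      comp2[OF P(2) Q(2) inQ(3) pq2 qo2] o by simp
  next
    case 3
    have B: "isB q" using S_notA q 3 by auto
    have zq: "le (ov z) q" using mixed_c[OF p q pq] 3 unfolding c_def z_def by simp
    have zq2: "le2 (g2 z) (snd q)" using le_D(2)[OF zq] ov_props by simp
    have l1: "le1 (fst p) (i1 z)" using unit1[OF P(1)] z_def by simp
    have a: "M2 (snd q) (g2 y) \<in> carrier_mat (D2 (g2 y)) (D2 (snd q))" using car2[OF Q(2) inQ(3) qo2] .
    have b: "M2 (g2 z) (snd q) \<in> carrier_mat (D2 (snd q)) (D2 (g2 z))" using car2[OF inQ(3) Q(2) zq2] .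
    have cc: "M1 (fst p) (i1 z) \<in> carrier_mat (D2 (g2 z)) (D1 (fst p))" using car1'[OF P(1) l1] .
    have "mapG q (ov y) * mapG p q = M2 (snd q) (g2 y) * (M2 (g2 z) (snd q) * M1 (fst p) (i1 z))"
      using map_AnA[OF 3] map_BB[OF q o(1) B o(3) qo] o z_def by simp
    also have "\<dots> = (M2 (snd q) (g2 y) * M2 (g2 z) (snd q)) * M1 (fst p) (i1 z)"
      using assoc_mult_mat[OF a b cc] by simp
    also have "M2 (snd q) (g2 y) * M2 (g2 z) (snd q) = M2 (g2 z) (g2 y)"
      using comp2[OF inQ(3) Q(2) inQ(3) zq2 qo2] by simp
    also have "M2 (g2 z) (g2 y) = M1 (i1 z) (i1 y)" using agm[OF zy] by simp
    also have "M1 (i1 z) (i1 y) * M1 (fst p) (i1 z) = M1 (fst p) (i1 y)"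
      using comp1[OF P(1) inQ(2) inQ(2) l1 monoP(2)[OF zy]] by simp
    also have "M1 (fst p) (i1 y) = mapG p (ov y)"
      using map_AA[OF 3(1) o(2)] o by simp
    finally show ?thesis by simp
  next
    case 4
    have B: "isB p" using S_notA p 4 by auto
    have zq: "le (ov z) q" using mixed_c[OF p q pq] 4 unfolding c_def z_def by simp
    have zq1: "le1 (i1 z) (fst q)" using le_D(1)[OF zq] ov_props by simp
    have l2: "le2 (snd p) (g2 z)" using unit2[OF P(2)] hz by simp
    have a: "M1 (fst q) (i1 y) \<in> carrier_mat (D1 (i1 y)) (D1 (fst q))" using car1[OF Q(1) inQ(2) qo1] .
    have b: "M1 (i1 z) (fst q) \<in> carrier_mat (D1 (fst q)) (D1 (i1 z))" using car1[OF inQ(2) Q(1) zq1] .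
    have cc: "M2 (snd p) (g2 z) \<in> carrier_mat (D1 (i1 z)) (D2 (snd p))" using car2'[OF P(2) l2] .
    have "mapG q (ov y) * mapG p q = M1 (fst q) (i1 y) * (M1 (i1 z) (fst q) * M2 (snd p) (g2 z))"
      using map_nAA[OF p 4] map_AA[OF 4(2) o(2)] o z_def by simp
    also have "\<dots> = (M1 (fst q) (i1 y) * M1 (i1 z) (fst q)) * M2 (snd p) (g2 z)"
      using assoc_mult_mat[OF a b cc] by simp
    also have "M1 (fst q) (i1 y) * M1 (i1 z) (fst q) = M1 (i1 z) (i1 y)"
      using comp1[OF inQ(2) Q(1) inQ(2) zq1 qo1] by simp
    also have "M1 (i1 z) (i1 y) = M2 (g2 z) (g2 y)" using agm[OF zy] by simp
    also have "M2 (g2 z) (g2 y) * M2 (snd p) (g2 z) = M2 (snd p) (g2 y)"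
      using comp2[OF P(2) inQ(3) inQ(3) l2 monoP(3)[OF zy]] by simp
    also have "M2 (snd p) (g2 y) = mapG p (ov y)"
      using map_BB[OF p o(1) B o(3) lpo] o by simp
    finally show ?thesis by simp
  qed
qed

lemma mapG_id: "p \<in> S \<Longrightarrow> mapG p p = 1\<^sub>m (dimG p)"
  unfolding mapG_def dimG_def using id1 id2 S_Q by auto

lemma funct:
  assumes p: "p \<in> S" and q: "q \<in> S" and r: "r \<in> S" and pq: "le p q" and qr: "le q r"
  shows "mapG p r = mapG q r * mapG p q"
proof -
  have pr: "le p r" using le_trans[OF p q r pq qr] .
  show ?thesis
  proof (cases "isA p \<noteq> isA q")
    case True
    define w where "w = c p"
    have oS: "w \<in> S" and oo: "w = ov (h1 (fst p))" using c_S w_def c_def by auto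
    have po: "le p w" using c_above[OF p] w_def by simp
    have oq: "le w q" using mixed_c[OF p q pq True] w_def by simp
    have or: "le w r" using le_trans[OF oS q r oq qr] .
    have e1: "mapG p q = mapG w q * mapG p w" using F2[OF p q po[unfolded oo] oq[unfolded oo]] oo by simp
    have e2: "mapG p r = mapG w r * mapG p w" using F2[OF p r po[unfolded oo] or[unfolded oo]] oo by simp
    have e3: "mapG w r = mapG q r * mapG w q" using F1[OF q r oq[unfolded oo] qr] oo by simp
    have "mapG q r * mapG p q = mapG q r * (mapG w q * mapG p w)" using e1 by simp
    also have "\<dots> = (mapG q r * mapG w q) * mapG p w"
      using assoc_mult_mat[OF mapG_car[OF q r qr] mapG_car[OF oS q oq] mapG_car[OF p oS po]] by simp
    finally show ?thesis using e2 e3 by simp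
  next
    case False
    note F = False
    show ?thesis
    proof (cases "isA q \<noteq> isA r")
      case True
      define w where "w = c q"
      have oS: "w \<in> S" and oo: "w = ov (h1 (fst q))" using c_S w_def c_def by auto
      have qo: "le q w" using c_above[OF q] w_def by simp
      have or: "le w r" using mixed_c[OF q r qr True] w_def by simp
      have po: "le p w" using le_trans[OF p q oS pq qo] .
      have e1: "mapG q r = mapG w r * mapG q w" using F2[OF q r qo[unfolded oo] or[unfolded oo]] oo by simp
      have e2: "mapG p r = mapG w r * mapG p w" using F2[OF p r po[unfolded oo] or[unfolded oo]] oo by simp
      have e3: "mapG p w = mapG q w * mapG p q" using F3[OF p q pq qo[unfolded oo]] oo by simp
      have "mapG q r * mapG p q = (mapG w r * mapG q w) * mapG p q" using e1 by simp
      also have "\<dots> = mapG w r * (mapG q w * mapG p q)"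
        using assoc_mult_mat[OF mapG_car[OF oS r or] mapG_car[OF q oS qo] mapG_car[OF p q pq]] by simp
      finally show ?thesis using e2 e3 by simp
    next
      case False
      show ?thesis
      proof (cases "isA p")
        case True
        then have "isA q" "isA r" using F False by auto
        then show ?thesis using True map_AA comp1 S_Q p q r le_D pq qr by metis
      next
        case nA: False
        then have "\<not> isA q" "\<not> isA r" using F False by auto
        then have B: "isB p" "isB q" "isB r" using nA S_notA p q r by auto
        show ?thesis using map_BB[OF p q B(1,2) pq] map_BB[OF q r B(2,3) qr] map_BB[OF p r B(1,3) pr]
          comp2[OF S_Q(2)[OF p] S_Q(2)[OF q] S_Q(2)[OF r] le_D(2)[OF pq] le_D(2)[OF qr]] by simp
      qed
    qed
  qed
qed

definition QN :: "nat set" where "QN = prod_encode ` S"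
definition leN :: "nat \<Rightarrow> nat \<Rightarrow> bool" where "leN u v = le (prod_decode u) (prod_decode v)"
definition FN :: "nat \<Rightarrow> 'p" where "FN u = f1 (fst (prod_decode u))"
definition GN :: "'p \<Rightarrow> nat" where "GN x = prod_encode (g1 x, g2 (h1 (g1 x)))"
definition HN :: "nat \<Rightarrow> 'p" where "HN u = h2 (snd (prod_decode u))"
definition IN :: "'p \<Rightarrow> nat" where "IN x = prod_encode (i1 (f2 (i2 x)), i2 x)"
definition \<Gamma>N :: "(nat, 'k) pmod" where
  "\<Gamma>N = (\<lambda>u. dimG (prod_decode u), \<lambda>u v. mapG (prod_decode u) (prod_decode v))"

lemma QN_S: "u \<in> QN \<Longrightarrow> prod_decode u \<in> S"
  unfolding QN_def by auto

lemma finite_S: "finite S"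
  using fp1 fp2 unfolding S_def finite_poset_def by auto

lemma GS: "(g1 x, g2 (h1 (g1 x))) \<in> S" and IS: "(i1 (f2 (i2 x)), i2 x) \<in> S"
  unfolding S_def using inQ by auto

lemma fpN: "finite_poset QN leN"
  unfolding finite_poset_def
proof (intro conjI ballI impI)
  show "finite QN" unfolding QN_def using finite_S by simp
next
  fix x assume "x \<in> QN" then show "leN x x" unfolding leN_def using le_refl QN_S by auto
next
  fix x y assume "x \<in> QN" "y \<in> QN" "leN x y \<and> leN y x"
  then have "prod_decode x = prod_decode y" unfolding leN_def using le_antisym QN_S by blast
  then show "x = y" by (metis prod_decode_inverse)
next
  fix x y z assume "x \<in> QN" "y \<in> QN" "z \<in> QN" "leN x y \<and> leN y z"
  then show "leN x z" unfolding leN_def using le_trans[OF QN_S QN_S QN_S] by blast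
qed

lemma giFG: "galois_insertion QN leN FN GN"
  unfolding galois_insertion_def
proof (intro conjI ballI impI allI)
  fix u v assume u: "u \<in> QN" and v: "v \<in> QN" and "leN u v"
  then show "FN u \<le> FN v" unfolding FN_def leN_def
    using monoQ(1)[OF S_Q(1)[OF QN_S[OF u]] S_Q(1)[OF QN_S[OF v]]] le_D(1) by blast
next
  fix x show "GN x \<in> QN" unfolding GN_def QN_def using GS by auto
next
  fix x y :: 'p assume "x \<le> y"
  then show "leN (GN x) (GN y)" unfolding leN_def GN_def le_def
    using monoP(1) monoP(3) monoQ(2)[OF inQ(1) inQ(1)] by simp
next
  fix u x assume u: "u \<in> QN"
  define p where "p = prod_decode u"
  have p: "p \<in> S" using QN_S u p_def by simp
  note P = S_Q[OF p]
  show "FN u \<le> x \<longleftrightarrow> leN u (GN x)"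
  proof
    assume a: "FN u \<le> x"
    then have 1: "le1 (fst p) (g1 x)" using adj(1)[OF P(1)] unfolding FN_def p_def by simp
    have "h1 (fst p) \<le> h1 (g1 x)" using monoQ(2)[OF P(1) inQ(1) 1] .
    then have "f2 (snd p) \<le> h1 (g1 x)" using S_h[OF p] by simp
    then have 2: "le2 (snd p) (g2 (h1 (g1 x)))" using adj(3)[OF P(2)] by simp
    show "leN u (GN x)" unfolding leN_def GN_def le_def using 1 2 p_def by simp
  next
    assume "leN u (GN x)"
    then have "le1 (fst p) (g1 x)" unfolding leN_def GN_def le_def p_def by simp
    then show "FN u \<le> x" using adj(1)[OF P(1)] unfolding FN_def p_def by simp
  qed
next
  fix x show "FN (GN x) = x" unfolding FN_def GN_def by simp
qed

lemma giHI: "galois_insertion QN leN HN IN"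
  unfolding galois_insertion_def
proof (intro conjI ballI impI allI)
  fix u v assume u: "u \<in> QN" and v: "v \<in> QN" and "leN u v"
  then show "HN u \<le> HN v" unfolding HN_def leN_def
    using monoQ(4)[OF S_Q(2)[OF QN_S[OF u]] S_Q(2)[OF QN_S[OF v]]] le_D(2) by blast
next
  fix x show "IN x \<in> QN" unfolding IN_def QN_def using IS by auto
next
  fix x y :: 'p assume "x \<le> y"
  then show "leN (IN x) (IN y)" unfolding leN_def IN_def le_def
    using monoP(2) monoP(4) monoQ(3)[OF inQ(4) inQ(4)] by simp
next
  fix u x assume u: "u \<in> QN"
  define p where "p = prod_decode u"
  have p: "p \<in> S" using QN_S u p_def by simp
  note P = S_Q[OF p]
  show "HN u \<le> x \<longleftrightarrow> leN u (IN x)"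
  proof
    assume a: "HN u \<le> x"
    then have 2: "le2 (snd p) (i2 x)" using adj(4)[OF P(2)] unfolding HN_def p_def by simp
    have "f2 (snd p) \<le> f2 (i2 x)" using monoQ(3)[OF P(2) inQ(4) 2] .
    then have "h1 (fst p) \<le> f2 (i2 x)" using S_h[OF p] by simp
    then have 1: "le1 (fst p) (i1 (f2 (i2 x)))" using adj(2)[OF P(1)] by simp
    show "leN u (IN x)" unfolding leN_def IN_def le_def using 1 2 p_def by simp
  next
    assume "leN u (IN x)"
    then have "le2 (snd p) (i2 x)" unfolding leN_def IN_def le_def p_def by simp
    then show "HN u \<le> x" using adj(4)[OF P(2)] unfolding HN_def p_def by simp
  qed
next
  fix x show "HN (IN x) = x" unfolding HN_def IN_def by simp
qed

lemma pmN: "is_pmod QN leN \<Gamma>N"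
  unfolding is_pmod_def \<Gamma>N_def fst_conv snd_conv leN_def
proof (intro conjI ballI impI)
  fix x assume "x \<in> QN" then show "mapG (prod_decode x) (prod_decode x) = 1\<^sub>m (dimG (prod_decode x))"
    using mapG_id QN_S by blast
next
  fix x y assume "x \<in> QN" "y \<in> QN" "le (prod_decode x) (prod_decode y)"
  then show "mapG (prod_decode x) (prod_decode y) \<in> carrier_mat (dimG (prod_decode y)) (dimG (prod_decode x))"
    using mapG_car QN_S by blast
next
  fix x y z assume "x \<in> QN" "y \<in> QN" "z \<in> QN" "le (prod_decode x) (prod_decode y) \<and> le (prod_decode y) (prod_decode z)"
  then show "mapG (prod_decode x) (prod_decode z) = mapG (prod_decode y) (prod_decode z) * mapG (prod_decode x) (prod_decode y)"
    using funct[OF QN_S QN_S QN_S] by blast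
qed

lemma pullG: "pullback GN \<Gamma>N = pullback g1 \<Gamma>1"
proof -
  have A: "isA (g1 x, g2 (h1 (g1 x)))" for x unfolding isA_def by simp
  show ?thesis unfolding pullback_def \<Gamma>N_def GN_def using A dimG_A map_AA by auto
qed

lemma pullI_dim: "fst (pullback IN \<Gamma>N) x = fst (pullback i2 \<Gamma>2) x"
  unfolding pullback_def \<Gamma>N_def IN_def using dimG_B[OF IS] unfolding isB_def by simp

lemma pullI_map: "x \<le> y \<Longrightarrow> snd (pullback IN \<Gamma>N) x y = snd (pullback i2 \<Gamma>2) x y"
proof -
  assume xy: "x \<le> y"
  have "le (i1 (f2 (i2 x)), i2 x) (i1 (f2 (i2 y)), i2 y)"
    using giHI xy unfolding galois_insertion_def leN_def IN_def by simp
  then show ?thesis unfolding pullback_def \<Gamma>N_def IN_def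
    using map_BB[OF IS IS] unfolding isB_def by simp
qed

lemma costN: "u \<in> QN \<Longrightarrow> \<exists>a\<in>Q1. \<exists>b\<in>Q2. h1 a = f2 b \<and> FN u = f1 a \<and> HN u = h2 b"
proof -
  assume u: "u \<in> QN"
  note p = QN_S[OF u]
  show ?thesis unfolding FN_def HN_def
  proof (intro bexI)
    show "h1 (fst (prod_decode u)) = f2 (snd (prod_decode u)) \<and> f1 (fst (prod_decode u)) = f1 (fst (prod_decode u))
      \<and> h2 (snd (prod_decode u)) = h2 (snd (prod_decode u))" using S_h[OF p] by simp
  qed (use S_Q[OF p] in auto)
qed

end

lemma glue_coupling:
  fixes d :: "'p::{finite,order} \<Rightarrow> 'p \<Rightarrow> real" and M N L :: "('p, 'k::field) pmod"
  assumes md: "is_metric d" and M: "is_pmod UNIV (\<le>) M" and N: "is_pmod UNIV (\<le>) N" and L: "is_pmod UNIV (\<le>) L"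
    and c1: "galois_coupling M N Q1 le1 f1 g1 h1 i1 \<Gamma>1" and c2: "galois_coupling N L Q2 le2 f2 g2 h2 i2 \<Gamma>2"
  shows "\<exists>Q leQ f g h i \<Gamma>. galois_coupling M L Q leQ f g h i \<Gamma> \<and>
           coupling_cost d Q f h \<le> coupling_cost d Q1 f1 h1 + coupling_cost d Q2 f2 h2"
proof -
  have fp1: "finite_poset Q1 le1" and gf1: "galois_insertion Q1 le1 f1 g1" and gh1: "galois_insertion Q1 le1 h1 i1"
    and pm1: "is_pmod Q1 le1 \<Gamma>1" and iM: "pmod_iso UNIV (\<le>) (pullback g1 \<Gamma>1) M"
    and iN1: "pmod_iso UNIV (\<le>) (pullback i1 \<Gamma>1) N"
    using c1 unfolding galois_coupling_def by auto
  have fp2: "finite_poset Q2 le2" and gf2: "galois_insertion Q2 le2 f2 g2" and gh2: "galois_insertion Q2 le2 h2 i2"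
    and pm2: "is_pmod Q2 le2 \<Gamma>2" and iN2: "pmod_iso UNIV (\<le>) (pullback g2 \<Gamma>2) N"
    and iL: "pmod_iso UNIV (\<le>) (pullback i2 \<Gamma>2) L"
    using c2 unfolding galois_coupling_def by auto
  have pb1g: "is_pmod UNIV (\<le>) (pullback g1 \<Gamma>1)" using pullback_pmod[OF gf1 pm1] .
  have pb1i: "is_pmod UNIV (\<le>) (pullback i1 \<Gamma>1)" using pullback_pmod[OF gh1 pm1] .
  have pb2g: "is_pmod UNIV (\<le>) (pullback g2 \<Gamma>2)" using pullback_pmod[OF gf2 pm2] .
  have pb2i: "is_pmod UNIV (\<le>) (pullback i2 \<Gamma>2)" using pullback_pmod[OF gh2 pm2] .
  have "pmod_iso UNIV (\<le>) N (pullback i1 \<Gamma>1)" using iso_sym[OF pb1i N iN1] .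
  then have "pmod_iso UNIV (\<le>) (pullback g2 \<Gamma>2) (pullback i1 \<Gamma>1)"
    using iso_trans[OF pb2g N pb1i iN2] by blast
  then obtain \<psi> where ps1: "\<forall>x. fst \<Gamma>1 (i1 x) = fst \<Gamma>2 (g2 x) \<and> \<psi> x \<in> carrier_mat (fst \<Gamma>2 (g2 x)) (fst \<Gamma>2 (g2 x))
        \<and> invertible_mat (\<psi> x)"
    and ps2: "\<forall>x y. x \<le> y \<longrightarrow> \<psi> y * snd \<Gamma>2 (g2 x) (g2 y) = snd \<Gamma>1 (i1 x) (i1 y) * \<psi> x"
    unfolding pmod_iso_def pullback_def by auto
  have f2g2: "f2 (g2 x) = x" for x using gf2 unfolding galois_insertion_def by auto
  define \<Phi> where "\<Phi> q = (if q \<in> range g2 then \<psi> (f2 q) else 1\<^sub>m (fst \<Gamma>2 q))" for q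
  have \<Phi>g: "\<Phi> (g2 y) = \<psi> y" for y unfolding \<Phi>_def using f2g2 by auto
  have \<Phi>ok: "\<forall>q\<in>Q2. \<Phi> q \<in> carrier_mat (fst \<Gamma>2 q) (fst \<Gamma>2 q) \<and> invertible_mat (\<Phi> q)"
  proof
    fix q assume "q \<in> Q2"
    show "\<Phi> q \<in> carrier_mat (fst \<Gamma>2 q) (fst \<Gamma>2 q) \<and> invertible_mat (\<Phi> q)"
    proof (cases "q \<in> range g2")
      case True
      then obtain y where "q = g2 y" by auto
      then show ?thesis using \<Phi>g ps1 by auto
    qed (auto simp: \<Phi>_def invertible_one)
  qed
  define \<Gamma>2' where "\<Gamma>2' = conjm \<Phi> \<Gamma>2"
  note cj = conjm_props[OF pm2 \<Phi>ok, folded \<Gamma>2'_def]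
  have fst2': "fst \<Gamma>2' = fst \<Gamma>2" unfolding \<Gamma>2'_def conjm_def by simp
  have agm: "snd \<Gamma>2' (g2 y) (g2 y') = snd \<Gamma>1 (i1 y) (i1 y')" if yy: "y \<le> y'" for y y'
  proof -
    have X: "snd \<Gamma>2 (g2 y) (g2 y') \<in> carrier_mat (fst \<Gamma>2 (g2 y')) (fst \<Gamma>2 (g2 y))"
      using pb2g yy unfolding is_pmod_def pullback_def by auto
    have "snd \<Gamma>1 (i1 y) (i1 y') \<in> carrier_mat (fst \<Gamma>1 (i1 y')) (fst \<Gamma>1 (i1 y))"
      using pb1i yy unfolding is_pmod_def pullback_def by auto
    then have Y: "snd \<Gamma>1 (i1 y) (i1 y') \<in> carrier_mat (fst \<Gamma>2 (g2 y')) (fst \<Gamma>2 (g2 y))"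
      using ps1 by simp
    have "snd \<Gamma>2' (g2 y) (g2 y') = \<psi> y' * snd \<Gamma>2 (g2 y) (g2 y') * minv (\<psi> y) (fst \<Gamma>2 (g2 y))"
      unfolding \<Gamma>2'_def conjm_def using \<Phi>g by simp
    also have "\<dots> = snd \<Gamma>1 (i1 y) (i1 y')"
      using swap_conj2[OF _ _ X Y ps2[rule_format, OF yy]] ps1 by simp
    finally show ?thesis .
  qed
  interpret G: glue Q1 le1 f1 g1 h1 i1 \<Gamma>1 Q2 le2 f2 g2 h2 i2 \<Gamma>2'
    by unfold_locales (use fp1 gf1 gh1 pm1 fp2 gf2 gh2 cj(1) fst2' ps1 agm in auto)
  have isoM: "pmod_iso UNIV (\<le>) (pullback G.GN G.\<Gamma>N) M" using G.pullG iM by simp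
  have pb2i': "is_pmod UNIV (\<le>) (pullback i2 \<Gamma>2')" using pullback_pmod[OF gh2 cj(1)] .
  have "\<forall>x. i2 x \<in> Q2" "\<forall>x y. x \<le> y \<longrightarrow> le2 (i2 x) (i2 y)" using gh2 unfolding galois_insertion_def by auto
  then have "pmod_iso UNIV (\<le>) (pullback i2 \<Gamma>2) (pullback i2 \<Gamma>2')"
    using iso_restrict[OF cj(2)] by blast
  then have "pmod_iso UNIV (\<le>) (pullback i2 \<Gamma>2') (pullback i2 \<Gamma>2)" using iso_sym[OF pb2i pb2i'] by blast
  then have "pmod_iso UNIV (\<le>) (pullback i2 \<Gamma>2') L" using iso_trans[OF pb2i' pb2i L _ iL] by blast
  then have isoL: "pmod_iso UNIV (\<le>) (pullback G.IN G.\<Gamma>N) L"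
    by (rule iso_transfer[rotated 2]) (use G.pullI_dim G.pullI_map in auto)
  have gc: "galois_coupling M L G.QN G.leN G.FN G.GN G.HN G.IN G.\<Gamma>N"
    unfolding galois_coupling_def using G.fpN G.giFG G.giHI G.pmN isoM isoL by blast
  have tri: "\<And>x y z. d x z \<le> d x y + d y z" using md unfolding is_metric_def by blast
  have "coupling_cost d G.QN G.FN G.HN \<le> coupling_cost d Q1 f1 h1 + coupling_cost d Q2 f2 h2"
    unfolding coupling_cost_def
  proof (rule SUP_least)
    fix u assume "u \<in> G.QN"
    then obtain a b where ab: "a \<in> Q1" "b \<in> Q2" "h1 a = f2 b" "G.FN u = f1 a" "G.HN u = h2 b"
      using G.costN by blast
    have "ereal (d (G.FN u) (G.HN u)) \<le> ereal (d (f1 a) (h1 a)) + ereal (d (f2 b) (h2 b))"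
      using tri[where x="f1 a" and y="f2 b" and z="h2 b"] ab by simp
    also have "\<dots> \<le> (SUP q\<in>Q1. ereal (d (f1 q) (h1 q))) + (SUP q\<in>Q2. ereal (d (f2 q) (h2 q)))"
      by (intro add_mono SUP_upper ab)
    finally show "ereal (d (G.FN u) (G.HN u)) \<le> (SUP q\<in>Q1. ereal (d (f1 q) (h1 q))) + (SUP q\<in>Q2. ereal (d (f2 q) (h2 q)))" .
  qed
  then show ?thesis using gc by blast
qed

definition CS :: "('p::{finite,order} \<Rightarrow> 'p \<Rightarrow> real) \<Rightarrow> ('p, 'k::field) pmod \<Rightarrow> ('p, 'k) pmod \<Rightarrow> ereal set" where
  "CS d M N = {c. \<exists>Q leQ f g h i \<Gamma>. galois_coupling M N Q leQ f g h i \<Gamma> \<and> c = coupling_cost d Q f h}"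

lemma dGT_CS: "d_GT d M N = Inf (CS d M N)"
  unfolding d_GT_def CS_def ..

lemma cost_attained:
  assumes gc: "galois_coupling M N Q leQ f g h i \<Gamma>"
  shows "\<exists>q\<in>Q. coupling_cost d Q f h = ereal (d (f q) (h q))"
proof -
  have fp: "finite_poset Q leQ" and gi: "galois_insertion Q leQ f g" using gc unfolding galois_coupling_def by auto
  have fin: "finite Q" using fp unfolding finite_poset_def by auto
  have "g undefined \<in> Q" using gi unfolding galois_insertion_def by auto
  then have ne: "Q \<noteq> {}" by auto
  let ?A = "(\<lambda>q. ereal (d (f q) (h q))) ` Q"
  have "coupling_cost d Q f h = Max ?A" unfolding coupling_cost_def
    using cSup_eq_Max[of ?A] fin ne by simp
  moreover have "Max ?A \<in> ?A" using fin ne by (intro Max_in) auto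
  ultimately show ?thesis by auto
qed

lemma CS_finite: "finite (CS d M N)"
proof -
  have "CS d M N \<subseteq> (\<lambda>(x, y). ereal (d x y)) ` UNIV"
  proof
    fix c assume "c \<in> CS d M N"
    then obtain Q leQ f g h i \<Gamma> where "galois_coupling M N Q leQ f g h i \<Gamma>" "c = coupling_cost d Q f h"
      unfolding CS_def by blast
    then obtain q where "c = ereal (d (f q) (h q))" using cost_attained by blast
    then show "c \<in> (\<lambda>(x, y). ereal (d x y)) ` UNIV" by (auto intro: image_eqI[of _ _ "(f q, h q)"])
  qed
  then show ?thesis by (rule finite_subset) simp
qed

lemma dGT_in: "CS d M N \<noteq> {} \<Longrightarrow> d_GT d M N \<in> CS d M N"
proof -
  assume ne: "CS d M N \<noteq> {}"
  have "d_GT d M N = Min (CS d M N)" unfolding dGT_CS using cInf_eq_Min[OF CS_finite ne] .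
  then show ?thesis using Min_in[OF CS_finite ne] by simp
qed

lemma dGT_empty: "CS d M N = {} \<Longrightarrow> d_GT d M N = \<infinity>"
  unfolding dGT_CS by (simp add: top_ereal_def)

lemma cost_nonneg:
  assumes md: "is_metric d" and gc: "galois_coupling M N Q leQ f g h i \<Gamma>"
  shows "0 \<le> coupling_cost d Q f h"
  using cost_attained[OF gc, of d] md unfolding is_metric_def by auto

lemma dGT_nonneg: "is_metric d \<Longrightarrow> 0 \<le> d_GT d M N"
  unfolding dGT_CS
proof (rule Inf_greatest)
  fix c assume md: "is_metric d" and "c \<in> CS d M N"
  then obtain Q leQ f g h i \<Gamma> where gc: "galois_coupling M N Q leQ f g h i \<Gamma>" and c: "c = coupling_cost d Q f h"
    unfolding CS_def by blast
  show "0 \<le> c" using cost_nonneg[OF md gc] c by simp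
qed

lemma CS_sym:
  assumes md: "is_metric d"
  shows "CS d M N \<subseteq> CS d N M"
proof
  fix c assume "c \<in> CS d M N"
  then obtain Q leQ f g h i \<Gamma> where gc: "galois_coupling M N Q leQ f g h i \<Gamma>" and c: "c = coupling_cost d Q f h"
    unfolding CS_def by blast
  have gc': "galois_coupling N M Q leQ h i f g \<Gamma>" using gc unfolding galois_coupling_def by blast
  have dsym: "d x y = d y x" for x y using md unfolding is_metric_def by blast
  have "coupling_cost d Q f h = coupling_cost d Q h f"
    unfolding coupling_cost_def by (intro SUP_cong refl arg_cong[where f=ereal] dsym)
  then show "c \<in> CS d N M" unfolding CS_def using gc' c by blast
qed

lemma CS_iso:
  assumes M: "is_pmod UNIV (\<le>) M" and M': "is_pmod UNIV (\<le>) M'" and N: "is_pmod UNIV (\<le>) N"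
    and N': "is_pmod UNIV (\<le>) N'" and iM: "pmod_iso UNIV (\<le>) M M'" and iN: "pmod_iso UNIV (\<le>) N N'"
  shows "CS d M N \<subseteq> CS d M' (N' :: ('p::{finite,order}, 'k::field) pmod)"
proof
  fix c assume "c \<in> CS d M N"
  then obtain Q leQ f g h i \<Gamma> where gc: "galois_coupling M N Q leQ f g h i \<Gamma>" and c: "c = coupling_cost d Q f h"
    unfolding CS_def by blast
  have gf: "galois_insertion Q leQ f g" and gh: "galois_insertion Q leQ h i" and pm: "is_pmod Q leQ \<Gamma>"
    and i1: "pmod_iso UNIV (\<le>) (pullback g \<Gamma>) M" and i2: "pmod_iso UNIV (\<le>) (pullback i \<Gamma>) N"
    and fp: "finite_poset Q leQ"
    using gc unfolding galois_coupling_def by auto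
  have "pmod_iso UNIV (\<le>) (pullback g \<Gamma>) M'" using iso_trans[OF pullback_pmod[OF gf pm] M M' i1 iM] .
  moreover have "pmod_iso UNIV (\<le>) (pullback i \<Gamma>) N'" using iso_trans[OF pullback_pmod[OF gh pm] N N' i2 iN] .
  ultimately have "galois_coupling M' N' Q leQ f g h i \<Gamma>" unfolding galois_coupling_def using fp gf gh pm by blast
  then show "c \<in> CS d M' N'" unfolding CS_def using c by blast
qed

lemma part1:
  assumes md: "is_metric d" and M: "is_pmod UNIV (\<le>) M" and N: "is_pmod UNIV (\<le>) N"
    and z: "d_GT d M N = 0"
  shows "pmod_iso UNIV (\<le>) M (N :: ('p::{finite,order}, 'k::field) pmod)"
proof -
  have "CS d M N \<noteq> {}" using dGT_empty[of d M N] z by auto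
  then have "0 \<in> CS d M N" using dGT_in z by metis
  then obtain Q leQ f g h i \<Gamma> where gc: "galois_coupling M N Q leQ f g h i \<Gamma>" and c: "0 = coupling_cost d Q f h"
    unfolding CS_def by blast
  have gf: "galois_insertion Q leQ f g" and gh: "galois_insertion Q leQ h i" and pm: "is_pmod Q leQ \<Gamma>"
    and i1: "pmod_iso UNIV (\<le>) (pullback g \<Gamma>) M" and i2: "pmod_iso UNIV (\<le>) (pullback i \<Gamma>) N"
    and fp: "finite_poset Q leQ"
    using gc unfolding galois_coupling_def by auto
  have fh: "f q = h q" if q: "q \<in> Q" for q
  proof -
    have "ereal (d (f q) (h q)) \<le> coupling_cost d Q f h"
      unfolding coupling_cost_def by (rule SUP_upper[OF q])
    then have "d (f q) (h q) \<le> 0" using c by simp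
    moreover have "0 \<le> d (f q) (h q)" using md unfolding is_metric_def by blast
    ultimately have "d (f q) (h q) = 0" by simp
    then show ?thesis using md unfolding is_metric_def by blast
  qed
  have gi: "g x = i x" for x
  proof -
    have gQ: "g x \<in> Q" and iQ: "i x \<in> Q" using gf gh unfolding galois_insertion_def by auto
    have adjh: "\<forall>u\<in>Q. \<forall>x. h u \<le> x \<longleftrightarrow> leQ u (i x)" and fgx: "f (g x) = x"
      using gh gf unfolding galois_insertion_def by auto
    have adjf: "\<forall>u\<in>Q. \<forall>x. f u \<le> x \<longleftrightarrow> leQ u (g x)" and hix: "h (i x) = x"
      using gh gf unfolding galois_insertion_def by auto
    have "h (g x) \<le> x" using fh[OF gQ] fgx by simp
    then have "leQ (g x) (i x)" using adjh gQ by blast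
    moreover have "f (i x) \<le> x" using fh[OF iQ] hix by simp
    then have "leQ (i x) (g x)" using adjf iQ by blast
    ultimately show ?thesis using fp gQ iQ unfolding finite_poset_def by blast
  qed
  then have "g = i" by auto
  then have i2': "pmod_iso UNIV (\<le>) (pullback g \<Gamma>) N" using i2 by simp
  have P: "is_pmod UNIV (\<le>) (pullback g \<Gamma>)" using pullback_pmod[OF gf pm] .
  show ?thesis using iso_trans[OF M P N iso_sym[OF P M i1] i2'] .
qed

lemma part2:
  assumes md: "is_metric d" and M: "is_pmod UNIV (\<le>) M"
  shows "d_GT d M (M :: ('p::{finite,order}, 'k::field) pmod) = 0"
proof -
  obtain enc :: "'p \<Rightarrow> nat" and n where "enc ` UNIV = {i. i < n}" "inj_on enc UNIV"
    using finite_imp_inj_to_nat_seg[of "UNIV :: 'p set"] by auto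
  then have inj: "inj enc" by simp
  define dec where "dec = inv_into UNIV enc"
  have de[simp]: "dec (enc x) = x" for x unfolding dec_def using inj by (simp add: inv_into_f_f)
  define Q where "Q = range enc"
  define leQ where "leQ u v = (dec u \<le> dec v)" for u v
  define \<Gamma> where "\<Gamma> = (\<lambda>u. fst M (dec u), \<lambda>u v. snd M (dec u) (dec v))"
  have fp: "finite_poset Q leQ" unfolding finite_poset_def
  proof (intro conjI ballI impI)
    show "finite Q" unfolding Q_def by simp
  next
    fix x assume "x \<in> Q" then show "leQ x x" unfolding leQ_def by simp
  next
    fix x y assume xy: "x \<in> Q" "y \<in> Q" "leQ x y \<and> leQ y x"
    then obtain a b where ab: "x = enc a" "y = enc b" unfolding Q_def by blast
    then have "a \<le> b" "b \<le> a" using xy(3) unfolding leQ_def by auto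
    then show "x = y" using ab by simp
  next
    fix x y z assume "x \<in> Q" "y \<in> Q" "z \<in> Q" "leQ x y \<and> leQ y z"
    then show "leQ x z" unfolding leQ_def by (meson order_trans)
  qed
  have gi: "galois_insertion Q leQ dec enc" unfolding galois_insertion_def
  proof (intro conjI ballI allI impI)
    fix u x assume "u \<in> Q"
    then obtain a where a: "u = enc a" unfolding Q_def by blast
    show "dec u \<le> x \<longleftrightarrow> leQ u (enc x)" unfolding leQ_def a by simp
  qed (auto simp: Q_def leQ_def)
  have pm: "is_pmod Q leQ \<Gamma>" unfolding is_pmod_def
  proof (intro conjI ballI impI)
    fix x assume "x \<in> Q"
    then obtain a where a: "x = enc a" unfolding Q_def by blast
    show "snd \<Gamma> x x = 1\<^sub>m (fst \<Gamma> x)" using M unfolding is_pmod_def \<Gamma>_def a by simp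
  next
    fix x y assume xy: "x \<in> Q" "y \<in> Q" "leQ x y"
    then obtain a b where ab: "x = enc a" "y = enc b" unfolding Q_def by blast
    then have "a \<le> b" using xy(3) unfolding leQ_def by simp
    then show "snd \<Gamma> x y \<in> carrier_mat (fst \<Gamma> y) (fst \<Gamma> x)" using M unfolding is_pmod_def \<Gamma>_def ab by simp
  next
    fix x y z assume xyz: "x \<in> Q" "y \<in> Q" "z \<in> Q" "leQ x y \<and> leQ y z"
    then obtain a b e where ab: "x = enc a" "y = enc b" "z = enc e" unfolding Q_def by blast
    then have "a \<le> b" "b \<le> e" using xyz(4) unfolding leQ_def by auto
    then show "snd \<Gamma> x z = snd \<Gamma> y z * snd \<Gamma> x y" using M unfolding is_pmod_def \<Gamma>_def ab by simp
  qed
  have pb: "pullback enc \<Gamma> = M" unfolding pullback_def \<Gamma>_def by simp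
  have gc: "galois_coupling M M Q leQ dec enc dec enc \<Gamma>"
    unfolding galois_coupling_def pb using fp gi pm iso_refl[OF M] by blast
  have dxx: "d x x = 0" for x using md unfolding is_metric_def by blast
  have "coupling_cost d Q dec dec = (SUP q\<in>Q. (0::ereal))"
    unfolding coupling_cost_def by (intro SUP_cong refl) (simp add: dxx)
  also have "\<dots> = 0" unfolding Q_def by simp
  finally have cst: "coupling_cost d Q dec dec = 0" .
  have "galois_coupling M M Q leQ dec enc dec enc \<Gamma> \<and> 0 = coupling_cost d Q dec dec" using gc cst by simp
  then have "0 \<in> CS d M M" unfolding CS_def by blast
  then have "d_GT d M M \<le> 0" unfolding dGT_CS by (rule Inf_lower)
  moreover have "0 \<le> d_GT d M M" by (rule dGT_nonneg[OF md])
  ultimately show ?thesis by (rule order_antisym)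
qed

lemma part4:
  assumes md: "is_metric d" and M: "is_pmod UNIV (\<le>) M" and N: "is_pmod UNIV (\<le>) N" and L: "is_pmod UNIV (\<le>) L"
  shows "d_GT d M L \<le> d_GT d M N + d_GT d N (L :: ('p::{finite,order}, 'k::field) pmod)"
proof (cases "CS d M N = {} \<or> CS d N L = {}")
  case True
  have n1: "0 \<le> d_GT d M N" by (rule dGT_nonneg[OF md])
  have n2: "0 \<le> d_GT d N L" by (rule dGT_nonneg[OF md])
  have sum: "d_GT d M N + d_GT d N L = \<infinity>" using True
  proof
    assume "CS d M N = {}"
    then have "d_GT d M N = \<infinity>" by (rule dGT_empty)
    then show ?thesis using n2 by simp
  next
    assume "CS d N L = {}"
    then have "d_GT d N L = \<infinity>" by (rule dGT_empty)
    then show ?thesis using n1 by simp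
  qed
  show ?thesis unfolding sum by simp
next
  case False
  then have ne1: "CS d M N \<noteq> {}" and ne2: "CS d N L \<noteq> {}" by auto
  have "d_GT d M N \<in> CS d M N" using dGT_in[OF ne1] .
  then obtain Q1 le1 f1 g1 h1 i1 \<Gamma>1 where
    c1: "galois_coupling M N Q1 le1 f1 g1 h1 i1 \<Gamma>1" "d_GT d M N = coupling_cost d Q1 f1 h1"
    unfolding CS_def by blast
  have "d_GT d N L \<in> CS d N L" using dGT_in[OF ne2] .
  then obtain Q2 le2 f2 g2 h2 i2 \<Gamma>2 where
    c2: "galois_coupling N L Q2 le2 f2 g2 h2 i2 \<Gamma>2" "d_GT d N L = coupling_cost d Q2 f2 h2"
    unfolding CS_def by blast
  obtain Q leQ f g h i \<Gamma> where gc: "galois_coupling M L Q leQ f g h i \<Gamma>"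
    and le: "coupling_cost d Q f h \<le> coupling_cost d Q1 f1 h1 + coupling_cost d Q2 f2 h2"
    using glue_coupling[OF md M N L c1(1) c2(1)] by blast
  have "coupling_cost d Q f h \<in> CS d M L" unfolding CS_def using gc by blast
  then have "d_GT d M L \<le> coupling_cost d Q f h" unfolding dGT_CS by (rule Inf_lower)
  then have "d_GT d M L \<le> coupling_cost d Q1 f1 h1 + coupling_cost d Q2 f2 h2" using le by (rule order_trans)
  then show ?thesis by (simp only: c1(2) c2(2))
qed

theorem corollary3p7:
  fixes d :: "'p::{finite,order} \<Rightarrow> 'p \<Rightarrow> real"
  assumes "is_metric d"
  shows "(\<forall>M N :: ('p, 'k::field) pmod. is_pmod UNIV (\<le>) M \<longrightarrow> is_pmod UNIV (\<le>) N \<longrightarrow>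
            d_GT d M N = 0 \<longrightarrow> pmod_iso UNIV (\<le>) M N)
       \<and> (\<forall>M :: ('p, 'k) pmod. is_pmod UNIV (\<le>) M \<longrightarrow> d_GT d M M = 0)
       \<and> (\<forall>M N :: ('p, 'k) pmod. is_pmod UNIV (\<le>) M \<longrightarrow> is_pmod UNIV (\<le>) N \<longrightarrow>
            d_GT d M N \<ge> 0 \<and> d_GT d M N = d_GT d N M)
       \<and> (\<forall>M N L :: ('p, 'k) pmod. is_pmod UNIV (\<le>) M \<longrightarrow> is_pmod UNIV (\<le>) N \<longrightarrow> is_pmod UNIV (\<le>) L \<longrightarrow>
            d_GT d M L \<le> d_GT d M N + d_GT d N L)
       \<and> (\<forall>M M' N N' :: ('p, 'k) pmod. is_pmod UNIV (\<le>) M \<longrightarrow> is_pmod UNIV (\<le>) M' \<longrightarrow>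
            is_pmod UNIV (\<le>) N \<longrightarrow> is_pmod UNIV (\<le>) N' \<longrightarrow>
            pmod_iso UNIV (\<le>) M M' \<longrightarrow> pmod_iso UNIV (\<le>) N N' \<longrightarrow> d_GT d M N = d_GT d M' N')"
proof (intro conjI allI impI)
  fix M N :: "('p, 'k) pmod"
  assume "is_pmod UNIV (\<le>) M" "is_pmod UNIV (\<le>) N" "d_GT d M N = 0"
  then show "pmod_iso UNIV (\<le>) M N" using part1[OF assms] by blast
next
  fix M :: "('p, 'k) pmod"
  assume "is_pmod UNIV (\<le>) M" then show "d_GT d M M = 0" using part2[OF assms] by blast
next
  fix M N :: "('p, 'k) pmod"
  show "0 \<le> d_GT d M N" using dGT_nonneg[OF assms] .
  have "CS d M N = CS d N M" using CS_sym[OF assms] by blast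
  then show "d_GT d M N = d_GT d N M" unfolding dGT_CS by simp
next
  fix M N L :: "('p, 'k) pmod"
  assume "is_pmod UNIV (\<le>) M" "is_pmod UNIV (\<le>) N" "is_pmod UNIV (\<le>) L"
  then show "d_GT d M L \<le> d_GT d M N + d_GT d N L" using part4[OF assms] by blast
next
  fix M M' N N' :: "('p, 'k) pmod"
  assume a: "is_pmod UNIV (\<le>) M" "is_pmod UNIV (\<le>) M'" "is_pmod UNIV (\<le>) N" "is_pmod UNIV (\<le>) N'"
    "pmod_iso UNIV (\<le>) M M'" "pmod_iso UNIV (\<le>) N N'"
  have "CS d M N \<subseteq> CS d M' N'" using CS_iso[OF a] .
  moreover have "CS d M' N' \<subseteq> CS d M N"
    using CS_iso[OF a(2,1,4,3) iso_sym[OF a(1,2,5)] iso_sym[OF a(3,4,6)]] .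
  ultimately show "d_GT d M N = d_GT d M' N'" unfolding dGT_CS by simp
qed

end
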